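(* Let $G$ be a finite group and let $\mathbf{O}(\underline{\mathbf{Set}})$ be the set of exponents consisting, for each $H\subseteq G$, of all orbits $H/K$ with $K\subsetneq H$ (each with a chosen ordering). There exists a (non-unique) map of operads $\mathcal{SM}_{\mathbf{O}(\underline{\mathbf{Set}})}\to\mathscr{P}_G$, and any such map is a levelwise $(G\times\Sigma_\bullet)$-equivalence: for every $n$ and every subgroup $\Lambda\subseteq G\times\Sigma_n$ the induced functor on $\Lambda$-fixed subcategories is an equivalence of categories.
   Context: For a finite $H$-set $T$ with ordering $\{1,\dots,|T|\}\cong T$, $\sigma:H\to\Sigma_{|T|}$ is its permutation representation and $\Gamma_T=\{(h,\sigma(h))\}\subseteq G\times\Sigma_{|T|}$. For a set $X$, $\widetilde X$ denotes the chaotic category with object set $X$ and exactly one morphism between any two objects (applied levelwise to operads in $G$-sets gives operads in $G$-categories). For a set of exponents $\mathcal{N}$, $\mathcal{SM}_{\mathcal{N}}=\widetilde{\mathbb{F}(S_{\mathcal{N}})}$, where $\mathbb{F}$ is the free operad functor on symmetric sequences of $G$-sets and $S_{\mathcal{N}}=(G\times\Sigma_0)/\Gamma_\varnothing\sqcup(G\times\Sigma_2)/\Gamma_{**}\sqcup\coprod_{T\in\mathcal{N}}(G\times\Sigma_{|T|})/\Gamma_T$ ($\varnothing$, $**$ trivial). The $G$-permutativity operad is $\mathscr{P}_G=\widetilde{\mathbf{Set}(G,\Sigma_\bullet)}$: level $n$ is the chaotic category on the set of functions $f:G\to\Sigma_n$, with $(g,\tau)\cdot f = (x\mapsto\tau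 f(g^{-1}x))$, and operad structure given pointwise by that of the associative operad ($\Sigma_\bullet$ with block-permutation composition); equivalently $\mathscr{P}_G=\mathbf{Fun}(\widetilde G,\mathscr{P})$ with $\mathscr{P}=\widetilde{\Sigma_\bullet}$ the Barratt–Eccles operad. *)

theory Defs
  imports "HOL-Algebra.Coset" "HOL-Combinatorics.Permutations" "HOL-Library.FuncSet"
begin

record ('o,'m) cat =
  obj :: "'o set"
  hom :: "'o \<Rightarrow> 'o \<Rightarrow> 'm set"
  idm :: "'o \<Rightarrow> 'm"
  cmp :: "'m \<Rightarrow> 'm \<Rightarrow> 'm"   (* cmp g f = g after f *)

definition chaotic :: "'o set \<Rightarrow> ('o, 'o \<times> 'o) cat" where
  "chaotic X = \<lparr> obj = X,
                 hom = (\<lambda>x y. if x \<in> X \<and> y \<in> X then {(x,y)} else {}),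
                 idm = (\<lambda>x. (x,x)),
                 cmp = (\<lambda>g f. (fst f, snd g)) \<rparr>"

definition is_functor :: "('o,'m) cat \<Rightarrow> ('p,'n) cat \<Rightarrow> ('o \<Rightarrow> 'p) \<Rightarrow> ('m \<Rightarrow> 'n) \<Rightarrow> bool" where
  "is_functor C D Fo Fm \<longleftrightarrow>
     (\<forall>x\<in>obj C. Fo x \<in> obj D) \<and>
     (\<forall>x\<in>obj C. \<forall>y\<in>obj C. \<forall>f\<in>hom C x y. Fm f \<in> hom D (Fo x) (Fo y)) \<and>
     (\<forall>x\<in>obj C. Fm (idm C x) = idm D (Fo x)) \<and>
     (\<forall>x\<in>obj C. \<forall>y\<in>obj C. \<forall>z\<in>obj C. \<forall>f\<in>hom C x y. \<forall>g\<in>hom C y z.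
        Fm (cmp C g f) = cmp D (Fm g) (Fm f))"

definition is_iso :: "('o,'m) cat \<Rightarrow> 'o \<Rightarrow> 'o \<Rightarrow> 'm \<Rightarrow> bool" where
  "is_iso D a b f \<longleftrightarrow> f \<in> hom D a b \<and>
     (\<exists>g\<in>hom D b a. cmp D g f = idm D a \<and> cmp D f g = idm D b)"

definition is_equivalence :: "('o,'m) cat \<Rightarrow> ('p,'n) cat \<Rightarrow> ('o \<Rightarrow> 'p) \<Rightarrow> ('m \<Rightarrow> 'n) \<Rightarrow> bool" where
  "is_equivalence C D Fo Fm \<longleftrightarrow>
     is_functor C D Fo Fm \<and>
     (\<forall>x\<in>obj C. \<forall>y\<in>obj C. \<forall>g\<in>hom D (Fo x) (Fo y). \<exists>f\<in>hom C x y. Fm f = g) \<and>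
     (\<forall>x\<in>obj C. \<forall>y\<in>obj C. inj_on Fm (hom C x y)) \<and>
     (\<forall>d\<in>obj D. \<exists>c\<in>obj C. \<exists>f. is_iso D (Fo c) d f)"

definition fixsub :: "('o,'m) cat \<Rightarrow> ('l \<Rightarrow> 'o \<Rightarrow> 'o) \<Rightarrow> ('l \<Rightarrow> 'm \<Rightarrow> 'm) \<Rightarrow> 'l set \<Rightarrow> ('o,'m) cat" where
  "fixsub C acto actm \<Lambda> = \<lparr> obj = {x \<in> obj C. \<forall>l\<in>\<Lambda>. acto l x = x},
      hom = (\<lambda>x y. {m \<in> hom C x y. \<forall>l\<in>\<Lambda>. actm l m = m}),
      idm = idm C, cmp = cmp C \<rparr>"

definition perms :: "nat \<Rightarrow> (nat \<Rightarrow> nat) set" where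
  "perms n = {\<sigma>. \<sigma> permutes {..<n}}"

definition subgroup_GS :: "('g,'b) monoid_scheme \<Rightarrow> nat \<Rightarrow> ('g \<times> (nat \<Rightarrow> nat)) set \<Rightarrow> bool" where
  "subgroup_GS G n \<Lambda> \<longleftrightarrow> \<Lambda> \<subseteq> carrier G \<times> perms n \<and> (\<one>\<^bsub>G\<^esub>, id) \<in> \<Lambda> \<and>
     (\<forall>(a,\<sigma>)\<in>\<Lambda>. \<forall>(b,\<rho>)\<in>\<Lambda>. (a \<otimes>\<^bsub>G\<^esub> b, \<sigma> \<circ> \<rho>) \<in> \<Lambda>) \<and>
     (\<forall>(a,\<sigma>)\<in>\<Lambda>. (inv\<^bsub>G\<^esub> a, Hilbert_Choice.inv \<sigma>) \<in> \<Lambda>)"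

definition cosets_GS :: "('g,'b) monoid_scheme \<Rightarrow> nat \<Rightarrow> ('g \<times> (nat \<Rightarrow> nat)) set
                          \<Rightarrow> ('g \<times> (nat \<Rightarrow> nat)) set set" where
  "cosets_GS G k \<Gamma> = {{(a \<otimes>\<^bsub>G\<^esub> h, \<sigma> \<circ> \<rho>) | h \<rho>. (h,\<rho>) \<in> \<Gamma>} | a \<sigma>. a \<in> carrier G \<and> \<sigma> \<in> perms k}"

definition coset_act :: "('g,'b) monoid_scheme \<Rightarrow> 'g \<times> (nat \<Rightarrow> nat)
                          \<Rightarrow> ('g \<times> (nat \<Rightarrow> nat)) set \<Rightarrow> ('g \<times> (nat \<Rightarrow> nat)) set" where
  "coset_act G l c = {(fst l \<otimes>\<^bsub>G\<^esub> b, snd l \<circ> \<rho>) | b \<rho>. (b,\<rho>) \<in> c}"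

section \<open>The set of exponents O(Set) and the generating symmetric sequence S_N\<close>

text \<open>Exponents: E0 = the empty G-set, E2 = the trivial G-set with two points,
  EO H K = the H-set H/K (H, K subgroups of G, K properly contained in H).\<close>
datatype 'g expo = E0 | E2 | EO "'g set" "'g set"

definition lcos :: "('g,'b) monoid_scheme \<Rightarrow> 'g set \<Rightarrow> 'g set \<Rightarrow> 'g set set" where
  "lcos G H K = (\<lambda>h. h <#\<^bsub>G\<^esub> K) ` H"

definition expos :: "('g,'b) monoid_scheme \<Rightarrow> 'g expo set" where
  "expos G = {E0, E2} \<union> {EO H K | H K. subgroup H G \<and> subgroup K G \<and> K \<subset> H}"

fun arity :: "('g,'b) monoid_scheme \<Rightarrow> 'g expo \<Rightarrow> nat" where
  "arity G E0 = 0"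
| "arity G E2 = 2"
| "arity G (EO H K) = card (lcos G H K)"

text \<open>Orderings: ord H K is a chosen bijection {0..<|H/K|} \<cong> H/K.\<close>
type_synonym 'g ordering = "'g set \<Rightarrow> 'g set \<Rightarrow> nat \<Rightarrow> 'g set"

definition orderings_ok :: "('g,'b) monoid_scheme \<Rightarrow> 'g ordering \<Rightarrow> bool" where
  "orderings_ok G ord \<longleftrightarrow> (\<forall>H K. subgroup H G \<and> subgroup K G \<and> K \<subset> H \<longrightarrow>
      bij_betw (ord H K) {..<card (lcos G H K)} (lcos G H K))"

definition permrep :: "('g,'b) monoid_scheme \<Rightarrow> 'g ordering \<Rightarrow> 'g set \<Rightarrow> 'g set \<Rightarrow> 'g \<Rightarrow> nat \<Rightarrow> nat" where
  "permrep G ord H K h = (\<lambda>i. if i < card (lcos G H K)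
       then (THE j. j < card (lcos G H K) \<and> ord H K j = h <#\<^bsub>G\<^esub> ord H K i) else i)"

fun Gamma :: "('g,'b) monoid_scheme \<Rightarrow> 'g ordering \<Rightarrow> 'g expo \<Rightarrow> ('g \<times> (nat \<Rightarrow> nat)) set" where
  "Gamma G ord E0 = carrier G \<times> {id}"
| "Gamma G ord E2 = carrier G \<times> {id}"
| "Gamma G ord (EO H K) = {(h, permrep G ord H K h) | h. h \<in> H}"

type_synonym 'g gen = "'g expo \<times> ('g \<times> (nat \<Rightarrow> nat)) set"

text \<open>S_N(k) = disjoint union over exponents T of arity k of (G \<times> \<Sigma>_k)/\<Gamma>_T.\<close>
definition gens :: "('g,'b) monoid_scheme \<Rightarrow> 'g ordering \<Rightarrow> nat \<Rightarrow> 'g gen set" where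
  "gens G ord k = {(e, c) | e c. e \<in> expos G \<and> arity G e = k \<and> c \<in> cosets_GS G k (Gamma G ord e)}"

definition gen_act :: "('g,'b) monoid_scheme \<Rightarrow> 'g \<times> (nat \<Rightarrow> nat) \<Rightarrow> 'g gen \<Rightarrow> 'g gen" where
  "gen_act G l s = (fst s, coset_act G l (snd s))"

section \<open>The free operad F(S_N) in G-sets\<close>

datatype 's tree = Leaf nat | Node 's "'s tree list"

fun leaves :: "'s tree \<Rightarrow> nat list" where
  "leaves (Leaf i) = [i]"
| "leaves (Node s cs) = concat (map leaves cs)"

fun nodes_ok :: "(nat \<Rightarrow> 's set) \<Rightarrow> 's tree \<Rightarrow> bool" where
  "nodes_ok S (Leaf i) = True"
| "nodes_ok S (Node s cs) = (s \<in> S (length cs) \<and> (\<forall>c\<in>set cs. nodes_ok S c))"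

definition wft :: "(nat \<Rightarrow> 's set) \<Rightarrow> nat \<Rightarrow> 's tree \<Rightarrow> bool" where
  "wft S n t \<longleftrightarrow> nodes_ok S t \<and> distinct (leaves t) \<and> set (leaves t) = {..<n}"

fun relabel :: "(nat \<Rightarrow> nat) \<Rightarrow> 's tree \<Rightarrow> 's tree" where
  "relabel f (Leaf i) = Leaf (f i)"
| "relabel f (Node s cs) = Node s (map (relabel f) cs)"

fun maplab :: "('s \<Rightarrow> 's) \<Rightarrow> 's tree \<Rightarrow> 's tree" where
  "maplab f (Leaf i) = Leaf i"
| "maplab f (Node s cs) = Node (f s) (map (maplab f) cs)"

fun subst :: "'s tree \<Rightarrow> nat list \<Rightarrow> 's tree list \<Rightarrow> 's tree" where
  "subst (Leaf j) ns ts = relabel (\<lambda>i. sum_list (take j ns) + i) (ts ! j)"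
| "subst (Node s cs) ns ts = Node s (map (\<lambda>c. subst c ns ts) cs)"

text \<open>The congruence identifying Node (\<sigma>\<cdot>s) [c_0..c_{k-1}] with Node s [c_{\<sigma> 0}..c_{\<sigma>(k-1)}]
  (equivariance of the generators).\<close>
inductive teq :: "(nat \<Rightarrow> 's set) \<Rightarrow> ((nat \<Rightarrow> nat) \<Rightarrow> 's \<Rightarrow> 's) \<Rightarrow> 's tree \<Rightarrow> 's tree \<Rightarrow> bool"
  for S and act where
  teq_refl: "teq S act t t"
| teq_sym: "teq S act t u \<Longrightarrow> teq S act u t"
| teq_trans: "teq S act t u \<Longrightarrow> teq S act u v \<Longrightarrow> teq S act t v"
| teq_cong: "list_all2 (teq S act) cs ds \<Longrightarrow> teq S act (Node s cs) (Node s ds)"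
| teq_equiv: "s \<in> S k \<Longrightarrow> \<sigma> \<in> perms k \<Longrightarrow> length cs = k \<Longrightarrow>
     teq S act (Node (act \<sigma> s) cs) (Node s (map (\<lambda>i. cs ! \<sigma> i) [0..<k]))"
monos list.rel_mono

definition teqG :: "('g,'b) monoid_scheme \<Rightarrow> 'g ordering \<Rightarrow> 'g gen tree \<Rightarrow> 'g gen tree \<Rightarrow> bool" where
  "teqG G ord = teq (gens G ord) (\<lambda>\<sigma>. gen_act G (\<one>\<^bsub>G\<^esub>, \<sigma>))"

definition cls :: "('g,'b) monoid_scheme \<Rightarrow> 'g ordering \<Rightarrow> 'g gen tree \<Rightarrow> 'g gen tree set" where
  "cls G ord t = {u. teqG G ord u t}"

definition FO :: "('g,'b) monoid_scheme \<Rightarrow> 'g ordering \<Rightarrow> nat \<Rightarrow> 'g gen tree set set" where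
  "FO G ord n = {cls G ord t | t. wft (gens G ord) n t}"

definition FO_act :: "('g,'b) monoid_scheme \<Rightarrow> 'g ordering \<Rightarrow> 'g \<times> (nat \<Rightarrow> nat)
                       \<Rightarrow> 'g gen tree set \<Rightarrow> 'g gen tree set" where
  "FO_act G ord l X = {u. \<exists>t\<in>X. teqG G ord u
       (relabel (snd l) (maplab (gen_act G (fst l, id)) t))}"

definition FO_comp :: "('g,'b) monoid_scheme \<Rightarrow> 'g ordering \<Rightarrow> 'g gen tree set \<Rightarrow> nat list
                        \<Rightarrow> 'g gen tree set list \<Rightarrow> 'g gen tree set" where
  "FO_comp G ord X ns Ys = {u. \<exists>t\<in>X. \<exists>ts. list_all2 (\<in>) ts Ys \<and> teqG G ord u (subst t ns ts)}"

definition FO_unit :: "('g,'b) monoid_scheme \<Rightarrow> 'g ordering \<Rightarrow> 'g gen tree set" where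
  "FO_unit G ord = cls G ord (Leaf 0)"

section \<open>The G-permutativity operad P_G = Set(G, \<Sigma>_\<bullet>) (object level)\<close>

definition PG :: "('g,'b) monoid_scheme \<Rightarrow> nat \<Rightarrow> ('g \<Rightarrow> nat \<Rightarrow> nat) set" where
  "PG G n = carrier G \<rightarrow>\<^sub>E perms n"

definition PG_act :: "('g,'b) monoid_scheme \<Rightarrow> 'g \<times> (nat \<Rightarrow> nat) \<Rightarrow> ('g \<Rightarrow> nat \<Rightarrow> nat) \<Rightarrow> ('g \<Rightarrow> nat \<Rightarrow> nat)" where
  "PG_act G l f = restrict (\<lambda>x. snd l \<circ> f (inv\<^bsub>G\<^esub> (fst l) \<otimes>\<^bsub>G\<^esub> x)) (carrier G)"

text \<open>Associative operad: w \<in> \<Sigma>_k (position \<mapsto> input), block-permutation composition.\<close>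
definition assoc_comp :: "(nat \<Rightarrow> nat) \<Rightarrow> nat list \<Rightarrow> (nat \<Rightarrow> nat) list \<Rightarrow> nat \<Rightarrow> nat" where
  "assoc_comp w ns vs = (let L = concat (map (\<lambda>p. map (\<lambda>q. sum_list (take (w p) ns) + (vs ! (w p)) q)
                                              [0..<ns ! (w p)]) [0..<length ns])
                         in (\<lambda>p. if p < length L then L ! p else p))"

definition PG_comp :: "('g,'b) monoid_scheme \<Rightarrow> ('g \<Rightarrow> nat \<Rightarrow> nat) \<Rightarrow> nat list
                        \<Rightarrow> ('g \<Rightarrow> nat \<Rightarrow> nat) list \<Rightarrow> ('g \<Rightarrow> nat \<Rightarrow> nat)" where
  "PG_comp G f ns fs = restrict (\<lambda>x. assoc_comp (f x) ns (map (\<lambda>h. h x) fs)) (carrier G)"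

definition PG_unit :: "('g,'b) monoid_scheme \<Rightarrow> ('g \<Rightarrow> nat \<Rightarrow> nat)" where
  "PG_unit G = restrict (\<lambda>x. id) (carrier G)"

section \<open>Maps of operads SM_N = chaotic F(S_N) \<rightarrow> P_G\<close>

text \<open>A map of operads between the chaotic G-category operads is given levelwise by functors
  chaotic(FO n) \<rightarrow> chaotic(PG n); such a functor is determined by its object function \<Phi> n
  (the arrow function is forced to be (x,y) \<mapsto> (\<Phi> n x, \<Phi> n y)), and compatibility with the
  operad structure on arrows follows from that on objects.\<close>
definition chaotic_functor :: "('a \<Rightarrow> 'b) \<Rightarrow> 'a \<times> 'a \<Rightarrow> 'b \<times> 'b" where
  "chaotic_functor F = (\<lambda>(x,y). (F x, F y))"

definition operad_map :: "('g,'b) monoid_scheme \<Rightarrow> 'g ordering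
                           \<Rightarrow> (nat \<Rightarrow> 'g gen tree set \<Rightarrow> ('g \<Rightarrow> nat \<Rightarrow> nat)) \<Rightarrow> bool" where
  "operad_map G ord \<Phi> \<longleftrightarrow>
     (\<forall>n. is_functor (chaotic (FO G ord n)) (chaotic (PG G n)) (\<Phi> n) (chaotic_functor (\<Phi> n))) \<and>
     (\<forall>n X a \<tau>. X \<in> FO G ord n \<longrightarrow> a \<in> carrier G \<longrightarrow> \<tau> \<in> perms n \<longrightarrow>
        \<Phi> n (FO_act G ord (a,\<tau>) X) = PG_act G (a,\<tau>) (\<Phi> n X)) \<and>
     (\<forall>X ns Ys. X \<in> FO G ord (length ns) \<longrightarrow> length Ys = length ns \<longrightarrow>
        (\<forall>i<length ns. Ys ! i \<in> FO G ord (ns ! i)) \<longrightarrow>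
        \<Phi> (sum_list ns) (FO_comp G ord X ns Ys) =
          PG_comp G (\<Phi> (length ns) X) ns (map (\<lambda>i. \<Phi> (ns ! i) (Ys ! i)) [0..<length ns])) \<and>
     \<Phi> 1 (FO_unit G ord) = PG_unit G"

end

theory Submission
  imports Defs
begin

definition cosetof :: "('g,'b) monoid_scheme \<Rightarrow> ('g \<times> (nat \<Rightarrow> nat)) set \<Rightarrow> 'g \<Rightarrow> (nat \<Rightarrow> nat) \<Rightarrow> ('g \<times> (nat \<Rightarrow> nat)) set" where
  "cosetof G \<Gamma> a \<sigma> = {(a \<otimes>\<^bsub>G\<^esub> h, \<sigma> \<circ> \<rho>) | h \<rho>. (h,\<rho>) \<in> \<Gamma>}"

lemma cosets_GS_alt: "cosets_GS G k \<Gamma> = {cosetof G \<Gamma> a \<sigma> | a \<sigma>. a \<in> carrier G \<and> \<sigma> \<in> perms k}"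
  unfolding cosets_GS_def cosetof_def by simp

definition rrep :: "('g,'b) monoid_scheme \<Rightarrow> 'g set \<Rightarrow> 'g \<Rightarrow> 'g" where
  "rrep G H y = (SOME z. \<exists>h\<in>H. z = h \<otimes>\<^bsub>G\<^esub> y)"

fun Fe :: "('g,'b) monoid_scheme \<Rightarrow> 'g ordering \<Rightarrow> 'g expo \<Rightarrow> 'g \<Rightarrow> nat \<Rightarrow> nat" where
  "Fe G ord (EO H K) y = permrep G ord H K (y \<otimes>\<^bsub>G\<^esub> inv\<^bsub>G\<^esub> (rrep G H y))"
| "Fe G ord E0 y = id"
| "Fe G ord E2 y = id"

definition phig :: "('g,'b) monoid_scheme \<Rightarrow> 'g ordering \<Rightarrow> 'g gen \<Rightarrow> 'g \<Rightarrow> nat \<Rightarrow> nat" where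
  "phig G ord s x = (case SOME p. p \<in> snd s of (a,\<sigma>) \<Rightarrow> \<sigma> \<circ> Fe G ord (fst s) (inv\<^bsub>G\<^esub> a \<otimes>\<^bsub>G\<^esub> x))"

lemma perms_id[simp]: "id \<in> perms k"
  by (simp add: perms_def permutes_id)

lemma perms_comp: "\<sigma> \<in> perms k \<Longrightarrow> \<tau> \<in> perms k \<Longrightarrow> \<sigma> \<circ> \<tau> \<in> perms k"
  by (simp add: perms_def permutes_compose)

locale pctx = group G for G :: "('g,'b) monoid_scheme" (structure) +
  fixes ord :: "'g ordering"
  assumes fin: "finite (carrier G)" and ordok: "orderings_ok G ord"
begin

context
  fixes H K
  assumes H: "subgroup H G" and K: "subgroup K G" and KH: "K \<subset> H"
begin

abbreviation "m \<equiv> card (lcos G H K)"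

lemma ordbij: "bij_betw (ord H K) {..<m} (lcos G H K)"
  using ordok H K KH unfolding orderings_ok_def by simp

lemma Hc: "H \<subseteq> carrier G" using H by (rule subgroup.subset)
lemma Kc: "K \<subseteq> carrier G" using K by (rule subgroup.subset)

lemma lcos_sub: "C \<in> lcos G H K \<Longrightarrow> C \<subseteq> carrier G"
proof -
  assume "C \<in> lcos G H K"
  then obtain h where "h \<in> H" "C = h <# K" unfolding lcos_def by blast
  then show ?thesis using l_coset_subset_G[OF Kc, of h] Hc by blast
qed

lemma lcos_act: "h \<in> H \<Longrightarrow> C \<in> lcos G H K \<Longrightarrow> h <# C \<in> lcos G H K"
proof -
  assume h: "h \<in> H" and C: "C \<in> lcos G H K"
  then obtain h' where h': "h' \<in> H" "C = h' <# K" unfolding lcos_def by blast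
  have hc: "h \<in> carrier G" "h' \<in> carrier G" using h h'(1) Hc by (auto dest: subsetD)
  have e: "h <# C = (h \<otimes> h') <# K" using lcos_m_assoc[OF Kc hc] h'(2) by simp
  have "h \<otimes> h' \<in> H" using subgroup.m_closed[OF H h h'(1)] .
  then show ?thesis unfolding lcos_def e by (rule imageI)
qed

lemma ord_in: "i < m \<Longrightarrow> ord H K i \<in> lcos G H K"
  using bij_betw_apply[OF ordbij] by simp

lemma ord_inj: "i < m \<Longrightarrow> j < m \<Longrightarrow> ord H K i = ord H K j \<Longrightarrow> i = j"
  using bij_betw_imp_inj_on[OF ordbij] unfolding inj_on_def by simp

lemma ord_surj: "C \<in> lcos G H K \<Longrightarrow> \<exists>j<m. ord H K j = C"
  using bij_betw_imp_surj_on[OF ordbij] by (metis imageE lessThan_iff)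

lemma permrep_prop:
  assumes h: "h \<in> H" and i: "i < m"
  shows "permrep G ord H K h i < m \<and> ord H K (permrep G ord H K h i) = h <# ord H K i"
proof -
  have oi: "ord H K i \<in> lcos G H K" using ord_in[OF i] .
  have in2: "h <# ord H K i \<in> lcos G H K" using lcos_act[OF h oi] .
  then obtain j where j: "j < m" "ord H K j = h <# ord H K i"
    using ord_surj by blast
  have uq: "\<exists>!j. j < m \<and> ord H K j = h <# ord H K i"
  proof (rule ex1I[of _ j])
    show "j < m \<and> ord H K j = h <# ord H K i" using j by simp
    fix j' assume "j' < m \<and> ord H K j' = h <# ord H K i"
    then show "j' = j" using j ord_inj by metis
  qed
  have "permrep G ord H K h i = (THE j. j < m \<and> ord H K j = h <# ord H K i)"
    unfolding permrep_def using i by simp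
  then show ?thesis using theI'[OF uq] by simp
qed

lemma permrep_uniq:
  assumes h: "h \<in> H" and i: "i < m" and j: "j < m" "ord H K j = h <# ord H K i"
  shows "permrep G ord H K h i = j"
  using permrep_prop[OF h i] j ord_inj by metis

lemma permrep_out: "\<not> i < m \<Longrightarrow> permrep G ord H K h i = i"
  unfolding permrep_def by simp

lemma permrep_mult:
  assumes h1: "h1 \<in> H" and h2: "h2 \<in> H"
  shows "permrep G ord H K (h1 \<otimes> h2) = permrep G ord H K h1 \<circ> permrep G ord H K h2"
proof
  fix i show "permrep G ord H K (h1 \<otimes> h2) i = (permrep G ord H K h1 \<circ> permrep G ord H K h2) i"
  proof (cases "i < m")
    case True
    have oi: "ord H K i \<in> lcos G H K" using ord_in[OF True] .
    note p2 = permrep_prop[OF h2 True]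
    note p1 = permrep_prop[OF h1 p2[THEN conjunct1]]
    have "ord H K (permrep G ord H K h1 (permrep G ord H K h2 i)) = (h1 \<otimes> h2) <# ord H K i"
    proof -
      have "ord H K (permrep G ord H K h1 (permrep G ord H K h2 i)) = h1 <# (h2 <# ord H K i)"
        using p1 p2 by simp
      also have "\<dots> = (h1 \<otimes> h2) <# ord H K i"
        using lcos_m_assoc[OF lcos_sub[OF oi], of h1 h2] h1 h2 Hc by (simp add: subsetD)
      finally show ?thesis .
    qed
    moreover have "h1 \<otimes> h2 \<in> H" using subgroup.m_closed[OF H h1 h2] .
    ultimately show ?thesis using permrep_uniq[OF _ True p1[THEN conjunct1]] by simp
  qed (simp add: permrep_out)
qed

lemma permrep_one: "permrep G ord H K \<one> = id"
proof
  fix i show "permrep G ord H K \<one> i = id i"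
  proof (cases "i < m")
    case True
    have oi: "ord H K i \<in> lcos G H K" using ord_in[OF True] .
    have "\<one> \<in> H" using subgroup.one_closed[OF H] .
    then show ?thesis using permrep_uniq[OF _ True True] lcos_mult_one[OF lcos_sub[OF oi]] by simp
  qed (simp add: permrep_out)
qed

lemma permrep_perm:
  assumes h: "h \<in> H" shows "permrep G ord H K h \<in> perms m"
proof -
  have hi: "inv h \<in> H" using subgroup.m_inv_closed[OF H h] .
  have c1: "permrep G ord H K h \<circ> permrep G ord H K (inv h) = id"
    using permrep_mult[OF h hi, symmetric] h Hc permrep_one by auto
  have c2: "permrep G ord H K (inv h) \<circ> permrep G ord H K h = id"
    using permrep_mult[OF hi h, symmetric] h Hc permrep_one by auto
  have "bij_betw (permrep G ord H K h) {..<m} {..<m}"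
    apply (rule bij_betw_byWitness[where f'="permrep G ord H K (inv h)"])
    using c1 c2 permrep_prop[OF h] permrep_prop[OF hi] by (auto simp: fun_eq_iff)
  then show ?thesis unfolding perms_def
    using bij_imp_permutes permrep_out by (metis lessThan_iff mem_Collect_eq)
qed

end

lemma rrep_ex:
  assumes H: "subgroup H G" and y: "y \<in> carrier G"
  shows "\<exists>h\<in>H. rrep G H y = h \<otimes> y"
proof -
  have "\<exists>z. \<exists>h\<in>H. z = h \<otimes> y" using subgroup.one_closed[OF H] by blast
  then show ?thesis unfolding rrep_def by (rule someI_ex)
qed

lemma rrep_mult:
  assumes H: "subgroup H G" and y: "y \<in> carrier G" and h0: "h0 \<in> H"
  shows "rrep G H (h0 \<otimes> y) = rrep G H y"
proof -
  have Hc: "H \<subseteq> carrier G" using H by (rule subgroup.subset)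
  have h0c: "h0 \<in> carrier G" using Hc h0 by (rule subsetD)
  have "(\<lambda>z. \<exists>h\<in>H. z = h \<otimes> (h0 \<otimes> y)) = (\<lambda>z. \<exists>h\<in>H. z = h \<otimes> y)"
  proof (rule ext, rule iffI)
    fix z assume "\<exists>h\<in>H. z = h \<otimes> (h0 \<otimes> y)"
    then obtain h where h: "h \<in> H" "z = h \<otimes> (h0 \<otimes> y)" by blast
    have hc: "h \<in> carrier G" using Hc h(1) by (rule subsetD)
    have "z = (h \<otimes> h0) \<otimes> y" using h(2) hc h0c y by (simp add: m_assoc)
    moreover have "h \<otimes> h0 \<in> H" using subgroup.m_closed[OF H h(1) h0] .
    ultimately show "\<exists>h\<in>H. z = h \<otimes> y" by blast
  next
    fix z assume "\<exists>h\<in>H. z = h \<otimes> y"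
    then obtain h where h: "h \<in> H" "z = h \<otimes> y" by blast
    have hc: "h \<in> carrier G" using Hc h(1) by (rule subsetD)
    have e1: "inv h0 \<otimes> (h0 \<otimes> y) = y" using h0c y by (simp add: m_assoc[symmetric])
    have "z = (h \<otimes> inv h0) \<otimes> (h0 \<otimes> y)" using h(2) hc h0c y e1 by (simp add: m_assoc)
    moreover have "h \<otimes> inv h0 \<in> H" using subgroup.m_closed[OF H h(1) subgroup.m_inv_closed[OF H h0]] .
    ultimately show "\<exists>h\<in>H. z = h \<otimes> (h0 \<otimes> y)" by blast
  qed
  then show ?thesis unfolding rrep_def by simp
qed

lemma rrep_in:
  assumes H: "subgroup H G" and y: "y \<in> carrier G"
  shows "y \<otimes> inv (rrep G H y) \<in> H"
proof -
  have Hc: "H \<subseteq> carrier G" using H by (rule subgroup.subset)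
  obtain h where h: "h \<in> H" "rrep G H y = h \<otimes> y" using rrep_ex[OF H y] by blast
  have hc: "h \<in> carrier G" using Hc h(1) by (rule subsetD)
  have "y \<otimes> inv (rrep G H y) = inv h" using h(2) hc y
    by (simp add: inv_mult_group m_assoc[symmetric])
  then show ?thesis using subgroup.m_inv_closed[OF H h(1)] by simp
qed

lemma expos_EO: "EO H K \<in> expos G \<Longrightarrow> subgroup H G \<and> subgroup K G \<and> K \<subset> H"
  unfolding expos_def by auto

lemma Gamma_sub:
  assumes e: "e \<in> expos G"
  shows "Gamma G ord e \<subseteq> carrier G \<times> perms (arity G e)"
proof (cases e)
  case (EO H K)
  have HK: "subgroup H G" "subgroup K G" "K \<subset> H" using expos_EO e EO by blast+
  have Hc: "H \<subseteq> carrier G" using HK(1) by (rule subgroup.subset)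
  show ?thesis unfolding EO using permrep_perm[OF HK] Hc by auto
qed auto

lemma Gamma_one: "e \<in> expos G \<Longrightarrow> \<exists>\<rho>. (\<one>, \<rho>) \<in> Gamma G ord e"
proof (cases e)
  case (EO H K)
  assume e: "e \<in> expos G"
  have HK: "subgroup H G" using expos_EO e EO by blast
  show ?thesis unfolding EO using subgroup.one_closed[OF HK] by auto
qed auto

lemma Fe_perm:
  assumes e: "e \<in> expos G" and y: "y \<in> carrier G"
  shows "Fe G ord e y \<in> perms (arity G e)"
proof (cases e)
  case (EO H K)
  have HK: "subgroup H G" "subgroup K G" "K \<subset> H" using expos_EO e EO by blast+
  show ?thesis unfolding EO using permrep_perm[OF HK rrep_in[OF HK(1) y]] by simp
qed auto

lemma Fe_equiv:
  assumes e: "e \<in> expos G" and hr: "(h,\<rho>) \<in> Gamma G ord e" and y: "y \<in> carrier G"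
  shows "Fe G ord e (h \<otimes> y) = \<rho> \<circ> Fe G ord e y"
proof (cases e)
  case (EO H K)
  have HK: "subgroup H G" "subgroup K G" "K \<subset> H" using expos_EO e EO by blast+
  have Hc: "H \<subseteq> carrier G" using HK(1) by (rule subgroup.subset)
  have h: "h \<in> H" and \<rho>: "\<rho> = permrep G ord H K h" using hr unfolding EO by auto
  have hc: "h \<in> carrier G" using Hc h by (rule subsetD)
  have r: "rrep G H (h \<otimes> y) = rrep G H y" using rrep_mult[OF HK(1) y h] .
  have ri: "y \<otimes> inv (rrep G H y) \<in> H" using rrep_in[OF HK(1) y] .
  have rc: "rrep G H y \<in> carrier G" using ri y Hc
    by (metis rrep_ex[OF HK(1) y] m_closed subsetD)
  have "h \<otimes> y \<otimes> inv (rrep G H (h \<otimes> y)) = h \<otimes> (y \<otimes> inv (rrep G H y))"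
    using r hc y rc by (simp add: m_assoc)
  then show ?thesis unfolding EO \<rho> using permrep_mult[OF HK h ri] by simp
qed (use hr in auto)

lemma Fe_inv:
  assumes e: "e \<in> expos G" and hr: "(h,\<rho>) \<in> Gamma G ord e" and z: "z \<in> carrier G"
  shows "\<rho> \<circ> Fe G ord e (inv h \<otimes> z) = Fe G ord e z"
proof -
  have hc: "h \<in> carrier G" using Gamma_sub[OF e] hr by auto
  have "Fe G ord e (h \<otimes> (inv h \<otimes> z)) = \<rho> \<circ> Fe G ord e (inv h \<otimes> z)"
    using Fe_equiv[OF e hr] hc z by simp
  moreover have "h \<otimes> (inv h \<otimes> z) = z" using hc z by (simp add: m_assoc[symmetric])
  ultimately show ?thesis by simp
qed

lemma coset_act_cosetof:
  assumes \<Gamma>: "fst ` \<Gamma> \<subseteq> carrier G" and a: "a \<in> carrier G" and b: "b \<in> carrier G"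
  shows "coset_act G (b,\<tau>) (cosetof G \<Gamma> a \<sigma>) = cosetof G \<Gamma> (b \<otimes> a) (\<tau> \<circ> \<sigma>)"
proof -
  have "\<And>h \<rho>. (h,\<rho>) \<in> \<Gamma> \<Longrightarrow> b \<otimes> (a \<otimes> h) = b \<otimes> a \<otimes> h"
  proof -
    fix h \<rho> assume "(h,\<rho>) \<in> \<Gamma>"
    then have "h \<in> carrier G" using \<Gamma> by force
    then show "b \<otimes> (a \<otimes> h) = b \<otimes> a \<otimes> h" using a b by (simp add: m_assoc)
  qed
  then show ?thesis unfolding coset_act_def cosetof_def by (auto simp: o_assoc) (metis o_assoc)+
qed

lemma gens_elim:
  assumes "s \<in> gens G ord k"
  obtains e a \<sigma> where "s = (e, cosetof G (Gamma G ord e) a \<sigma>)" "e \<in> expos G" "arity G e = k"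
     "a \<in> carrier G" "\<sigma> \<in> perms k"
  using assms unfolding gens_def cosets_GS_alt by blast

lemma phig_coset:
  assumes e: "e \<in> expos G" and a: "a \<in> carrier G" and x: "x \<in> carrier G"
  shows "phig G ord (e, cosetof G (Gamma G ord e) a \<sigma>) x = \<sigma> \<circ> Fe G ord e (inv a \<otimes> x)"
proof -
  let ?c = "cosetof G (Gamma G ord e) a \<sigma>"
  obtain \<rho>0 where "(\<one>, \<rho>0) \<in> Gamma G ord e" using Gamma_one[OF e] by blast
  then have "(a \<otimes> \<one>, \<sigma> \<circ> \<rho>0) \<in> ?c" unfolding cosetof_def by blast
  then have "(SOME p. p \<in> ?c) \<in> ?c" by (rule someI)
  then obtain h \<rho> where hr: "(h,\<rho>) \<in> Gamma G ord e" and sp: "(SOME p. p \<in> ?c) = (a \<otimes> h, \<sigma> \<circ> \<rho>)"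
    unfolding cosetof_def by blast
  have hc: "h \<in> carrier G" using Gamma_sub[OF e] hr by auto
  have ax: "inv a \<otimes> x \<in> carrier G" using a x by simp
  have "inv (a \<otimes> h) \<otimes> x = inv h \<otimes> (inv a \<otimes> x)" using a hc x
    by (simp add: inv_mult_group m_assoc)
  then have "phig G ord (e, ?c) x = \<sigma> \<circ> (\<rho> \<circ> Fe G ord e (inv h \<otimes> (inv a \<otimes> x)))"
    unfolding phig_def snd_conv fst_conv sp by (simp add: o_assoc)
  also have "\<dots> = \<sigma> \<circ> Fe G ord e (inv a \<otimes> x)" using Fe_inv[OF e hr ax] by simp
  finally show ?thesis .
qed

lemma Gamma_fst: "e \<in> expos G \<Longrightarrow> fst ` Gamma G ord e \<subseteq> carrier G"
  using Gamma_sub by force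

lemma gen_act_coset:
  assumes e: "e \<in> expos G" and a: "a \<in> carrier G" and b: "b \<in> carrier G"
  shows "gen_act G (b,\<tau>) (e, cosetof G (Gamma G ord e) a \<sigma>) = (e, cosetof G (Gamma G ord e) (b \<otimes> a) (\<tau> \<circ> \<sigma>))"
  unfolding gen_act_def using coset_act_cosetof[OF Gamma_fst[OF e] a b] by simp

lemma phig_perm:
  assumes s: "s \<in> gens G ord k" and x: "x \<in> carrier G"
  shows "phig G ord s x \<in> perms k"
proof -
  obtain e a \<sigma> where s: "s = (e, cosetof G (Gamma G ord e) a \<sigma>)" "e \<in> expos G" "arity G e = k"
     "a \<in> carrier G" "\<sigma> \<in> perms k" using gens_elim[OF s] by blast
  show ?thesis unfolding s(1) phig_coset[OF s(2) s(4) x]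
    using perms_comp[OF s(5)] Fe_perm[OF s(2), of "inv a \<otimes> x"] s(3,4) x by simp
qed

lemma phig_act_perm:
  assumes s: "s \<in> gens G ord k" and x: "x \<in> carrier G"
  shows "phig G ord (gen_act G (\<one>,\<tau>) s) x = \<tau> \<circ> phig G ord s x"
proof -
  obtain e a \<sigma> where s: "s = (e, cosetof G (Gamma G ord e) a \<sigma>)" "e \<in> expos G" "arity G e = k"
     "a \<in> carrier G" "\<sigma> \<in> perms k" using gens_elim[OF s] by blast
  show ?thesis unfolding s(1) gen_act_coset[OF s(2) s(4) one_closed]
    using phig_coset[OF s(2) _ x] s(4) by (simp add: o_assoc)
qed

lemma phig_act_grp:
  assumes s: "s \<in> gens G ord k" and x: "x \<in> carrier G" and b: "b \<in> carrier G"
  shows "phig G ord (gen_act G (b,id) s) x = phig G ord s (inv b \<otimes> x)"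
proof -
  obtain e a \<sigma> where s: "s = (e, cosetof G (Gamma G ord e) a \<sigma>)" "e \<in> expos G" "arity G e = k"
     "a \<in> carrier G" "\<sigma> \<in> perms k" using gens_elim[OF s] by blast
  have "inv (b \<otimes> a) \<otimes> x = inv a \<otimes> (inv b \<otimes> x)" using s(4) b x
    by (simp add: inv_mult_group m_assoc)
  then show ?thesis unfolding s(1) gen_act_coset[OF s(2) s(4) b]
    using phig_coset[OF s(2) _ x] phig_coset[OF s(2) s(4), of "inv b \<otimes> x"] s(4) b x by simp
qed

lemma gens_act:
  assumes s: "s \<in> gens G ord k" and b: "b \<in> carrier G" and \<tau>: "\<tau> \<in> perms k"
  shows "gen_act G (b,\<tau>) s \<in> gens G ord k"
proof -
  obtain e a \<sigma> where s: "s = (e, cosetof G (Gamma G ord e) a \<sigma>)" "e \<in> expos G" "arity G e = k"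
     "a \<in> carrier G" "\<sigma> \<in> perms k" using gens_elim[OF s] by blast
  show ?thesis unfolding s(1) gen_act_coset[OF s(2) s(4) b] gens_def cosets_GS_alt
    using s b perms_comp[OF \<tau> s(5)] by auto
qed

lemma gens_comm:
  assumes s: "s \<in> gens G ord k" and b: "b \<in> carrier G"
  shows "gen_act G (b,id) (gen_act G (\<one>,\<sigma>') s) = gen_act G (\<one>,\<sigma>') (gen_act G (b,id) s)"
proof -
  obtain e a \<sigma> where s: "s = (e, cosetof G (Gamma G ord e) a \<sigma>)" "e \<in> expos G" "arity G e = k"
     "a \<in> carrier G" "\<sigma> \<in> perms k" using gens_elim[OF s] by blast
  show ?thesis unfolding s(1) gen_act_coset[OF s(2) s(4) one_closed] gen_act_coset[OF s(2) s(4) b]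
    using gen_act_coset[OF s(2) _ b] gen_act_coset[OF s(2) _ one_closed] s(4) b by simp
qed

end

fun trav :: "('g,'b) monoid_scheme \<Rightarrow> 'g ordering \<Rightarrow> 'g gen tree \<Rightarrow> 'g \<Rightarrow> nat list" where
  "trav G ord (Leaf i) x = [i]"
| "trav G ord (Node s cs) x =
     concat (map (\<lambda>p. map (\<lambda>c. trav G ord c x) cs ! phig G ord s x p) [0..<length cs])"

lemma perm_lt: "f \<in> perms k \<Longrightarrow> p < k \<Longrightarrow> f p < k"
  unfolding perms_def using permutes_in_image[of f "{..<k}" p] by simp

lemma list_all2_map_eq:
  "list_all2 (\<lambda>a b. P a b \<and> f a = f b) xs ys \<Longrightarrow> map f xs = map f ys"
  by (induction rule: list_all2_induct) auto

lemma sum_list_perm: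
  fixes xs :: "'a::comm_monoid_add list"
  assumes "w permutes {..<length xs}"
  shows "sum_list (permute_list w xs) = sum_list xs"
proof -
  have "mset (permute_list w xs) = mset xs" using mset_permute_list[OF assms] .
  then have "sum_mset (mset (permute_list w xs)) = sum_mset (mset xs)" by simp
  then show ?thesis by (simp add: sum_mset_sum_list)
qed

lemma concat_map_concat: "concat (map g (concat xss)) = concat (map (\<lambda>xs. concat (map g xs)) xss)"
  by (induction xss) auto

lemma map_upt_cong: "(\<And>p. p < n \<Longrightarrow> f p = g p) \<Longrightarrow> map f [0..<n] = map g [0..<n]"
  by simp

context pctx begin

lemma trav_teq:
  assumes "teqG G ord t u" and x: "x \<in> carrier G"
  shows "trav G ord t x = trav G ord u x"
  using assms(1) unfolding teqG_def
proof (induction rule: teq.induct)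
  case (teq_cong cs ds s)
  have l: "length cs = length ds" using teq_cong list_all2_lengthD by blast
  have "map (\<lambda>c. trav G ord c x) cs = map (\<lambda>c. trav G ord c x) ds"
    using list_all2_map_eq[OF teq_cong] .
  then show ?case using l by simp
next
  case (teq_equiv s k \<sigma> cs)
  have w: "phig G ord s x \<in> perms k" using phig_perm[OF teq_equiv(1) x] .
  have e1: "phig G ord (gen_act G (\<one>, \<sigma>) s) x = \<sigma> \<circ> phig G ord s x"
    using phig_act_perm[OF teq_equiv(1) x] .
  show ?case
  proof -
    have pt: "\<And>p. p < k \<Longrightarrow> map (\<lambda>c. trav G ord c x) cs ! (\<sigma> (phig G ord s x p)) =
       map (\<lambda>c. trav G ord c x) (map (\<lambda>i. cs ! \<sigma> i) [0..<k]) ! phig G ord s x p"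
      using perm_lt[OF w] perm_lt[OF teq_equiv(2)] teq_equiv(3) by simp
    have eq: "map (\<lambda>p. map (\<lambda>c. trav G ord c x) cs ! phig G ord (gen_act G (\<one>, \<sigma>) s) x p) [0..<k]
       = map (\<lambda>p. map (\<lambda>c. trav G ord c x) (map (\<lambda>i. cs ! \<sigma> i) [0..<k]) ! phig G ord s x p) [0..<k]"
      by (rule map_cong[OF refl]) (use pt e1 in simp)
    show ?thesis unfolding trav.simps length_map length_upt diff_zero teq_equiv(3) eq by (rule refl)
  qed
qed auto

lemma nodes_ok_relabel: "nodes_ok S (relabel f t) = nodes_ok S t"
  by (induction t) auto

lemma trav_relabel:
  assumes "nodes_ok (gens G ord) t" and x: "x \<in> carrier G"
  shows "trav G ord (relabel f t) x = map f (trav G ord t x)"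
  using assms(1)
proof (induction t)
  case (Node s cs)
  have w: "phig G ord s x \<in> perms (length cs)" using phig_perm Node.prems x by simp
  have pt: "\<And>p. p < length cs \<Longrightarrow> map (\<lambda>c. trav G ord c x) (map (relabel f) cs) ! phig G ord s x p
     = map f (map (\<lambda>c. trav G ord c x) cs ! phig G ord s x p)"
    using perm_lt[OF w] Node by simp
  have "map (\<lambda>p. map (\<lambda>c. trav G ord c x) (map (relabel f) cs) ! phig G ord s x p) [0..<length cs]
     = map (\<lambda>p. map f (map (\<lambda>c. trav G ord c x) cs ! phig G ord s x p)) [0..<length cs]"
    by (rule map_upt_cong) (rule pt)
  then have "trav G ord (relabel f (Node s cs)) x = concat (map (\<lambda>p. map f (map (\<lambda>c. trav G ord c x) cs ! phig G ord s x p)) [0..<length cs])"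
    by (simp only: relabel.simps trav.simps length_map)
  also have "\<dots> = map f (concat (map (\<lambda>p. map (\<lambda>c. trav G ord c x) cs ! phig G ord s x p) [0..<length cs]))"
    by (simp add: map_concat o_def)
  finally show ?case by (simp only: trav.simps)
qed simp

lemma trav_maplab:
  assumes "nodes_ok (gens G ord) t" and x: "x \<in> carrier G" and a: "a \<in> carrier G"
  shows "trav G ord (maplab (gen_act G (a,id)) t) x = trav G ord t (inv a \<otimes> x)"
  using assms(1) x
proof (induction t arbitrary: x)
  case (Node s cs)
  have x': "inv a \<otimes> x \<in> carrier G" using Node.prems a by simp
  have w: "phig G ord s (inv a \<otimes> x) \<in> perms (length cs)" using phig_perm Node.prems x' by simp
  have e: "phig G ord (gen_act G (a,id) s) x = phig G ord s (inv a \<otimes> x)"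
    using phig_act_grp[of s "length cs" x a] Node.prems a by simp
  have pt: "\<And>p. p < length cs \<Longrightarrow> map (\<lambda>c. trav G ord c x) (map (maplab (gen_act G (a,id))) cs) ! phig G ord s (inv a \<otimes> x) p
     = map (\<lambda>c. trav G ord c (inv a \<otimes> x)) cs ! phig G ord s (inv a \<otimes> x) p"
  proof -
    fix p assume p: "p < length cs"
    have q: "phig G ord s (inv a \<otimes> x) p < length cs" using perm_lt[OF w p] .
    then have c: "cs ! phig G ord s (inv a \<otimes> x) p \<in> set cs" by simp
    have ok: "nodes_ok (gens G ord) (cs ! phig G ord s (inv a \<otimes> x) p)" using Node.prems c by simp
    show "?thesis p" using q Node.IH[OF c ok Node.prems(2)] by (simp add: id_def)
  qed
  have "map (\<lambda>p. map (\<lambda>c. trav G ord c x) (map (maplab (gen_act G (a,id))) cs) ! phig G ord s (inv a \<otimes> x) p) [0..<length cs]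
     = map (\<lambda>p. map (\<lambda>c. trav G ord c (inv a \<otimes> x)) cs ! phig G ord s (inv a \<otimes> x) p) [0..<length cs]"
    by (rule map_upt_cong) (rule pt)
  then show ?case by (simp only: maplab.simps trav.simps length_map e)
qed simp

lemma mset_trav:
  assumes "nodes_ok (gens G ord) t" and x: "x \<in> carrier G"
  shows "mset (trav G ord t x) = mset (leaves t)"
  using assms(1)
proof (induction t)
  case (Node s cs)
  let ?L = "map (\<lambda>c. trav G ord c x) cs"
  have w: "phig G ord s x permutes {..<length ?L}"
    using phig_perm Node.prems x unfolding perms_def by simp
  have pl: "map (\<lambda>p. ?L ! phig G ord s x p) [0..<length cs] = permute_list (phig G ord s x) ?L"
    unfolding permute_list_def by simp
  have "mset (trav G ord (Node s cs) x) = sum_list (map mset (permute_list (phig G ord s x) ?L))"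
    unfolding trav.simps pl mset_concat ..
  also have "\<dots> = sum_list (permute_list (phig G ord s x) (map mset ?L))"
    by (rule arg_cong[where f=sum_list], rule permute_list_map[OF w, symmetric])
  also have "\<dots> = sum_list (map mset ?L)" by (rule sum_list_perm) (use w in simp)
  also have "\<dots> = sum_list (map mset (map leaves cs))"
    using Node by (simp cong: map_cong)
  finally show ?case by (simp add: mset_concat)
qed simp

lemma trav_subst:
  assumes "nodes_ok (gens G ord) t" and x: "x \<in> carrier G"
    and ts: "\<forall>j\<in>set (leaves t). nodes_ok (gens G ord) (ts ! j)"
  shows "trav G ord (subst t ns ts) x =
     concat (map (\<lambda>j. map (\<lambda>i. sum_list (take j ns) + i) (trav G ord (ts ! j) x)) (trav G ord t x))"
  using assms(1) ts
proof (induction t)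
  case (Leaf j)
  then show ?case using trav_relabel x by simp
next
  case (Node s cs)
  have w: "phig G ord s x \<in> perms (length cs)" using phig_perm Node.prems x by simp
  let ?g = "\<lambda>j. map (\<lambda>i. sum_list (take j ns) + i) (trav G ord (ts ! j) x)"
  have "\<And>p. p < length cs \<Longrightarrow> map (\<lambda>c. trav G ord c x) (map (\<lambda>c. subst c ns ts) cs) ! phig G ord s x p
     = concat (map ?g (map (\<lambda>c. trav G ord c x) cs ! phig G ord s x p))"
  proof -
    fix p assume p: "p < length cs"
    have q: "phig G ord s x p < length cs" using perm_lt[OF w p] .
    then have c: "cs ! phig G ord s x p \<in> set cs" by simp
    have ok1: "nodes_ok (gens G ord) (cs ! phig G ord s x p)" using Node.prems(1) c by simp
    have ok2: "\<forall>j\<in>set (leaves (cs ! phig G ord s x p)). nodes_ok (gens G ord) (ts ! j)"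
      using Node.prems(2) c by auto
    show "?thesis p" using q Node.IH[OF c ok1 ok2] by simp
  qed
  then have "map (\<lambda>p. map (\<lambda>c. trav G ord c x) (map (\<lambda>c. subst c ns ts) cs) ! phig G ord s x p) [0..<length cs]
     = map (\<lambda>p. concat (map ?g (map (\<lambda>c. trav G ord c x) cs ! phig G ord s x p))) [0..<length cs]"
    by (rule map_upt_cong)
  then have "trav G ord (subst (Node s cs) ns ts) x = concat (map (\<lambda>p. concat (map ?g (map (\<lambda>c. trav G ord c x) cs ! phig G ord s x p))) [0..<length cs])"
    by (simp only: subst.simps trav.simps length_map)
  also have "\<dots> = concat (map ?g (concat (map (\<lambda>p. map (\<lambda>c. trav G ord c x) cs ! phig G ord s x p) [0..<length cs])))"
    by (simp only: concat_map_concat map_map o_def)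
  finally show ?case by (simp only: trav.simps)
qed

end

definition PhiF :: "('g,'b) monoid_scheme \<Rightarrow> 'g ordering \<Rightarrow> nat \<Rightarrow> 'g gen tree set \<Rightarrow> 'g \<Rightarrow> nat \<Rightarrow> nat" where
  "PhiF G ord n X = restrict (\<lambda>x i. if i < n then trav G ord (SOME t. t \<in> X) x ! i else i) (carrier G)"

lemma perm_of_list:
  assumes d: "distinct xs" and s: "set xs = {..<n}"
  shows "(\<lambda>i. if i < n then xs ! i else i) \<in> perms n"
proof -
  have l: "length xs = n" using distinct_card[OF d] s by simp
  have "bij_betw (\<lambda>i. if i < n then xs ! i else i) {..<n} {..<n}"
  proof (rule bij_betw_imageI)
    show "inj_on (\<lambda>i. if i < n then xs ! i else i) {..<n}"
      using d l by (auto simp: inj_on_def nth_eq_iff_index_eq)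
    show "(\<lambda>i. if i < n then xs ! i else i) ` {..<n} = {..<n}"
      using l s by (auto simp: image_def set_conv_nth)
  qed
  then show ?thesis unfolding perms_def mem_Collect_eq by (intro bij_imp_permutes) auto
qed

lemma teq_relabel:
  assumes "teq S act t u"
  shows "teq S act (relabel f t) (relabel f u)"
  using assms
proof (induction rule: teq.induct)
  case (teq_cong cs ds s)
  have "list_all2 (teq S act) (map (relabel f) cs) (map (relabel f) ds)"
    using teq_cong by (simp add: list.rel_map list_all2_mono[where P="\<lambda>x1 x2. teq S act x1 x2 \<and> teq S act (relabel f x1) (relabel f x2)"])
  then show ?case by (simp add: teq.teq_cong)
next
  case (teq_equiv s k \<sigma> cs)
  have A: "teq S act (Node (act \<sigma> s) (map (relabel f) cs)) (Node s (map (\<lambda>i. map (relabel f) cs ! \<sigma> i) [0..<k]))"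
    by (rule teq.teq_equiv) (use teq_equiv in simp_all)
  have B: "map (\<lambda>i. map (relabel f) cs ! \<sigma> i) [0..<k] = map (relabel f) (map (\<lambda>i. cs ! \<sigma> i) [0..<k])"
    using perm_lt[OF teq_equiv(2)] teq_equiv(3) by simp
  show ?case unfolding relabel.simps using A unfolding B .
qed (auto intro: teq.intros)

context pctx begin

lemma teqG_refl: "teqG G ord t t"
  unfolding teqG_def by (rule teq.teq_refl)

lemma teqG_sym: "teqG G ord t u \<Longrightarrow> teqG G ord u t"
  unfolding teqG_def by (rule teq.teq_sym)

lemma teqG_trans: "teqG G ord t u \<Longrightarrow> teqG G ord u v \<Longrightarrow> teqG G ord t v"
  unfolding teqG_def by (rule teq.teq_trans)

lemma teqG_relabel: "teqG G ord t u \<Longrightarrow> teqG G ord (relabel f t) (relabel f u)"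
  unfolding teqG_def by (rule teq_relabel)

lemma teqG_maplab:
  assumes "teqG G ord t u" and b: "b \<in> carrier G"
  shows "teqG G ord (maplab (gen_act G (b,id)) t) (maplab (gen_act G (b,id)) u)"
  using assms(1) unfolding teqG_def
proof (induction rule: teq.induct)
  case (teq_cong cs ds s)
  let ?M = "maplab (gen_act G (b,id))"
  let ?T = "teq (gens G ord) (\<lambda>\<sigma>. gen_act G (\<one>, \<sigma>))"
  have "list_all2 (\<lambda>x y. ?T (?M x) (?M y)) cs ds" using teq_cong by (rule list_all2_mono) (simp add: id_def)
  then have "list_all2 ?T (map ?M cs) (map ?M ds)" by (simp add: list.rel_map)
  then show ?case unfolding id_def by (simp add: teq.teq_cong)
next
  case (teq_equiv s k \<sigma> cs)
  let ?M = "maplab (gen_act G (b,id))"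
  have s': "gen_act G (b,id) s \<in> gens G ord k" using gens_act[OF teq_equiv(1) b] by simp
  have c: "gen_act G (b,id) (gen_act G (\<one>,\<sigma>) s) = gen_act G (\<one>,\<sigma>) (gen_act G (b,id) s)"
    using gens_comm[OF teq_equiv(1) b] .
  have A: "teq (gens G ord) (\<lambda>\<sigma>. gen_act G (\<one>, \<sigma>)) (Node (gen_act G (\<one>,\<sigma>) (gen_act G (b,id) s)) (map ?M cs))
     (Node (gen_act G (b,id) s) (map (\<lambda>i. map ?M cs ! \<sigma> i) [0..<k]))"
    by (rule teq.teq_equiv) (use s' teq_equiv in simp_all)
  have B: "map (\<lambda>i. map ?M cs ! \<sigma> i) [0..<k] = map ?M (map (\<lambda>i. cs ! \<sigma> i) [0..<k])"
    using perm_lt[OF teq_equiv(2)] teq_equiv(3) by simp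
  show ?case unfolding maplab.simps id_def[symmetric] c B[symmetric] by (rule A)
qed (auto intro: teq.intros)

lemma set_permute_upt:
  assumes "\<sigma> \<in> perms k" "length cs = k"
  shows "set (map (\<lambda>i. cs ! \<sigma> i) [0..<k]) = set cs"
proof -
  have "map (\<lambda>i. cs ! \<sigma> i) [0..<k] = permute_list \<sigma> cs" unfolding permute_list_def using assms by simp
  moreover have "mset (permute_list \<sigma> cs) = mset cs"
    using assms by (intro mset_permute_list) (simp add: perms_def)
  ultimately show ?thesis by (metis set_mset_mset)
qed

lemma teqG_nodes_ok:
  assumes "teqG G ord t u"
  shows "nodes_ok (gens G ord) t = nodes_ok (gens G ord) u"
  using assms unfolding teqG_def
proof (induction rule: teq.induct)
  case (teq_cong cs ds s)
  have l: "length cs = length ds" using teq_cong list_all2_lengthD by blast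
  have "(\<forall>c\<in>set cs. nodes_ok (gens G ord) c) = (\<forall>d\<in>set ds. nodes_ok (gens G ord) d)"
    using teq_cong l by (simp add: list_all2_conv_all_nth all_set_conv_all_nth)
  then show ?case using l by simp
next
  case (teq_equiv s k \<sigma> cs)
  have "gen_act G (\<one>,\<sigma>) s \<in> gens G ord k" using gens_act[OF teq_equiv(1) one_closed teq_equiv(2)] .
  then show ?case using teq_equiv set_permute_upt[OF teq_equiv(2,3)] by simp
qed auto

lemma nodes_ok_maplab:
  assumes "nodes_ok (gens G ord) t" and b: "b \<in> carrier G"
  shows "nodes_ok (gens G ord) (maplab (gen_act G (b,id)) t)"
  using assms(1) by (induction t) (auto intro: gens_act[OF _ b perms_id])

lemma cls_self: "t \<in> cls G ord t"
  unfolding cls_def using teqG_refl by simp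

lemma FO_elim:
  assumes "X \<in> FO G ord n"
  obtains t0 where "wft (gens G ord) n t0" "X = cls G ord t0"
  using assms unfolding FO_def by blast

lemma trav_cls: "u \<in> cls G ord t0 \<Longrightarrow> x \<in> carrier G \<Longrightarrow> trav G ord u x = trav G ord t0 x"
  unfolding cls_def using trav_teq by simp

lemma trav_wft:
  assumes "wft (gens G ord) n t" and x: "x \<in> carrier G"
  shows "distinct (trav G ord t x) \<and> set (trav G ord t x) = {..<n} \<and> length (trav G ord t x) = n"
proof -
  have m: "mset (trav G ord t x) = mset (leaves t)" using mset_trav assms unfolding wft_def by blast
  have d: "distinct (trav G ord t x)" using m assms(1) unfolding wft_def
    using mset_eq_imp_distinct_iff by blast
  have s: "set (trav G ord t x) = {..<n}" using m assms(1) unfolding wft_def by (metis set_mset_mset)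
  show ?thesis using d s distinct_card[OF d] by simp
qed

lemma Phi_cls:
  assumes "wft (gens G ord) n t0" and x: "x \<in> carrier G"
  shows "PhiF G ord n (cls G ord t0) x = (\<lambda>i. if i < n then trav G ord t0 x ! i else i)"
proof -
  have "(SOME t. t \<in> cls G ord t0) \<in> cls G ord t0" using cls_self by (rule someI)
  then have "trav G ord (SOME t. t \<in> cls G ord t0) x = trav G ord t0 x" using trav_cls[OF _ x] by blast
  then show ?thesis unfolding PhiF_def by (simp only: restrict_apply'[OF x])
qed

lemma Phi_PG:
  assumes "X \<in> FO G ord n"
  shows "PhiF G ord n X \<in> PG G n"
proof -
  obtain t0 where t0: "wft (gens G ord) n t0" "X = cls G ord t0" using FO_elim[OF assms] by blast
  have "\<And>x. x \<in> carrier G \<Longrightarrow> PhiF G ord n X x \<in> perms n"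
    using Phi_cls[OF t0(1)] t0(2) trav_wft[OF t0(1)] perm_of_list by simp
  then show ?thesis unfolding PG_def PhiF_def by auto
qed

end

lemma chaotic_is_functor:
  assumes "\<forall>x\<in>X. F x \<in> Y"
  shows "is_functor (chaotic X) (chaotic Y) F (chaotic_functor F)"
  using assms unfolding is_functor_def chaotic_def chaotic_functor_def by auto

lemma sum_list_map_mset:
  fixes f :: "'a \<Rightarrow> nat"
  assumes "mset xs = mset ys"
  shows "sum_list (map f xs) = sum_list (map f ys)"
proof -
  have "sum_list (map f xs) = sum_mset (mset (map f xs))" by (rule sum_mset_sum_list[symmetric])
  also have "\<dots> = sum_mset (mset (map f ys))" using assms by (simp only: mset_map)
  also have "\<dots> = sum_list (map f ys)" by (rule sum_mset_sum_list)
  finally show ?thesis .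
qed

lemma map_upt_nth: "map (\<lambda>q. f (xs ! q)) [0..<length xs] = map f xs"
  by (rule nth_equalityI) auto

context pctx begin

lemma Phi_equiv:
  assumes X: "X \<in> FO G ord n" and a: "a \<in> carrier G" and \<tau>: "\<tau> \<in> perms n"
  shows "PhiF G ord n (FO_act G ord (a,\<tau>) X) = PG_act G (a,\<tau>) (PhiF G ord n X)"
proof -
  obtain t0 where t0: "wft (gens G ord) n t0" "X = cls G ord t0" using FO_elim[OF X] by blast
  have ok0: "nodes_ok (gens G ord) t0" using t0(1) unfolding wft_def by simp
  let ?t1 = "relabel \<tau> (maplab (gen_act G (a,id)) t0)"
  have tr: "trav G ord u x = map \<tau> (trav G ord t0 (inv a \<otimes> x))"
    if u: "u \<in> FO_act G ord (a,\<tau>) X" and x: "x \<in> carrier G" for u x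
  proof -
    obtain t where t: "t \<in> X" "teqG G ord u (relabel \<tau> (maplab (gen_act G (a,id)) t))"
      using u unfolding FO_act_def by auto
    have "teqG G ord t t0" using t(1) t0(2) unfolding cls_def by simp
    then have "teqG G ord (relabel \<tau> (maplab (gen_act G (a,id)) t)) ?t1"
      by (intro teqG_relabel teqG_maplab a)
    then have "teqG G ord u ?t1" using t(2) teqG_trans by blast
    then have "trav G ord u x = trav G ord ?t1 x" using trav_teq x by blast
    also have "\<dots> = map \<tau> (trav G ord (maplab (gen_act G (a,id)) t0) x)"
      using trav_relabel[OF nodes_ok_maplab[OF ok0 a] x] .
    also have "\<dots> = map \<tau> (trav G ord t0 (inv a \<otimes> x))" using trav_maplab[OF ok0 x a] by simp
    finally show ?thesis .
  qed
  have t1in: "?t1 \<in> FO_act G ord (a,\<tau>) X"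
    unfolding FO_act_def using cls_self t0(2) teqG_refl by auto
  have some: "(SOME u. u \<in> FO_act G ord (a,\<tau>) X) \<in> FO_act G ord (a,\<tau>) X"
    using t1in by (rule someI)
  show ?thesis
  proof (rule ext)
    fix x show "PhiF G ord n (FO_act G ord (a,\<tau>) X) x = PG_act G (a,\<tau>) (PhiF G ord n X) x"
    proof (cases "x \<in> carrier G")
      case True
      have ax: "inv a \<otimes> x \<in> carrier G" using a True by simp
      have len: "length (trav G ord t0 (inv a \<otimes> x)) = n" using trav_wft[OF t0(1) ax] by simp
      have L: "PhiF G ord n (FO_act G ord (a,\<tau>) X) x =
         (\<lambda>i. if i < n then map \<tau> (trav G ord t0 (inv a \<otimes> x)) ! i else i)"
        unfolding PhiF_def by (simp only: restrict_apply'[OF True] tr[OF some True])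
      have R: "PG_act G (a,\<tau>) (PhiF G ord n X) x = \<tau> \<circ> (\<lambda>i. if i < n then trav G ord t0 (inv a \<otimes> x) ! i else i)"
        unfolding PG_act_def using True Phi_cls[OF t0(1) ax] t0(2) by simp
      have out: "\<And>i. \<not> i < n \<Longrightarrow> \<tau> i = i" using \<tau> unfolding perms_def permutes_def by simp
      show ?thesis unfolding L R using len out by (auto simp: fun_eq_iff)
    next
      case False
      then show ?thesis unfolding PhiF_def PG_act_def by simp
    qed
  qed
qed

lemma wft_leaf0: "wft (gens G ord) 1 (Leaf 0)"
  unfolding wft_def by auto

lemma Phi_unit: "PhiF G ord 1 (FO_unit G ord) = PG_unit G"
proof (rule ext)
  fix x show "PhiF G ord 1 (FO_unit G ord) x = PG_unit G x"
  proof (cases "x \<in> carrier G")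
    case True
    show ?thesis unfolding FO_unit_def Phi_cls[OF wft_leaf0 True] PG_unit_def using True
      by (auto simp: fun_eq_iff)
  next
    case False
    then show ?thesis unfolding PhiF_def PG_unit_def by simp
  qed
qed


lemma Phi_comp:
  assumes X: "X \<in> FO G ord (length ns)" and lY: "length Ys = length ns"
    and Y: "\<forall>i<length ns. Ys ! i \<in> FO G ord (ns ! i)"
  shows "PhiF G ord (sum_list ns) (FO_comp G ord X ns Ys) =
     PG_comp G (PhiF G ord (length ns) X) ns (map (\<lambda>i. PhiF G ord (ns ! i) (Ys ! i)) [0..<length ns])"
proof -
  define k where "k = length ns"
  obtain t0 where t0: "wft (gens G ord) k t0" "X = cls G ord t0" using FO_elim[OF X] k_def by blast
  define tt where "tt i = (SOME t. wft (gens G ord) (ns ! i) t \<and> Ys ! i = cls G ord t)" for i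
  have tt: "wft (gens G ord) (ns ! i) (tt i) \<and> Ys ! i = cls G ord (tt i)" if "i < k" for i
  proof -
    have "Ys ! i \<in> FO G ord (ns ! i)" using Y that k_def by simp
    then obtain t where "wft (gens G ord) (ns ! i) t" "Ys ! i = cls G ord t" by (rule FO_elim)
    then have "\<exists>t. wft (gens G ord) (ns ! i) t \<and> Ys ! i = cls G ord t" by blast
    then show ?thesis unfolding tt_def by (rule someI_ex)
  qed
  define ts where "ts = map tt [0..<k]"
  have ok0: "nodes_ok (gens G ord) t0" using t0(1) unfolding wft_def by simp
  show ?thesis
  proof (rule ext)
    fix x show "PhiF G ord (sum_list ns) (FO_comp G ord X ns Ys) x =
       PG_comp G (PhiF G ord (length ns) X) ns (map (\<lambda>i. PhiF G ord (ns ! i) (Ys ! i)) [0..<length ns]) x"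
    proof (cases "x \<in> carrier G")
      case False
      then show ?thesis unfolding PhiF_def PG_comp_def by simp
    next
      case x: True
      define T0 where "T0 = trav G ord t0 x"
      define Tj where "Tj j = trav G ord (tt j) x" for j
      define Lx where "Lx = concat (map (\<lambda>j. map (\<lambda>i. sum_list (take j ns) + i) (Tj j)) T0)"
      have T0p: "distinct T0 \<and> set T0 = {..<k} \<and> length T0 = k" unfolding T0_def using trav_wft[OF t0(1) x] .
      have Tjp: "length (Tj j) = ns ! j" if "j < k" for j
        unfolding Tj_def using trav_wft[OF tt[OF that, THEN conjunct1] x] by simp
      have claim1: "trav G ord u x = Lx" if u: "u \<in> FO_comp G ord X ns Ys" for u
      proof -
        obtain t ts' where t: "t \<in> X" "list_all2 (\<in>) ts' Ys" "teqG G ord u (subst t ns ts')"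
          using u unfolding FO_comp_def by blast
        have tt0: "teqG G ord t t0" using t(1) t0(2) unfolding cls_def by simp
        have okt: "nodes_ok (gens G ord) t" using teqG_nodes_ok[OF tt0] ok0 by simp
        have travt: "trav G ord t x = T0" unfolding T0_def using trav_teq[OF tt0 x] .
        have "set (leaves t) = set (trav G ord t x)" using mset_trav[OF okt x] by (metis set_mset_mset)
        then have lt: "set (leaves t) = {..<k}" using travt T0p by simp
        have lts: "length ts' = k" using list_all2_lengthD[OF t(2)] lY k_def by simp
        have tsj: "ts' ! j \<in> cls G ord (tt j)" if "j < k" for j
          using t(2) tt[OF that] lts that by (auto simp: list_all2_conv_all_nth)
        have okj: "nodes_ok (gens G ord) (ts' ! j)" if "j < k" for j
        proof -
          have "teqG G ord (ts' ! j) (tt j)" using tsj[OF that] unfolding cls_def by simp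
          then show ?thesis using teqG_nodes_ok tt[OF that] unfolding wft_def by blast
        qed
        have trj: "trav G ord (ts' ! j) x = Tj j" if "j < k" for j
          unfolding Tj_def using trav_cls[OF tsj[OF that] x] .
        have "trav G ord u x = trav G ord (subst t ns ts') x" using trav_teq[OF t(3) x] .
        also have "\<dots> = concat (map (\<lambda>j. map (\<lambda>i. sum_list (take j ns) + i) (trav G ord (ts' ! j) x)) (trav G ord t x))"
          by (rule trav_subst[OF okt x]) (use lt okj in auto)
        also have "\<dots> = Lx" unfolding Lx_def travt
          using trj T0p by (intro arg_cong[where f=concat] map_cong) auto
        finally show ?thesis .
      qed
      have sin: "subst t0 ns ts \<in> FO_comp G ord X ns Ys"
      proof -
        have "list_all2 (\<in>) ts Ys" unfolding ts_def
          using tt cls_self lY k_def by (auto simp: list_all2_conv_all_nth)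
        then show ?thesis unfolding FO_comp_def using t0(2) cls_self teqG_refl by blast
      qed
      have some: "(SOME u. u \<in> FO_comp G ord X ns Ys) \<in> FO_comp G ord X ns Ys"
        using sin by (rule someI)
      have LHS: "PhiF G ord (sum_list ns) (FO_comp G ord X ns Ys) x = (\<lambda>i. if i < sum_list ns then Lx ! i else i)"
        unfolding PhiF_def by (simp only: restrict_apply'[OF x] claim1[OF some])
      have w: "PhiF G ord (length ns) X x = (\<lambda>i. if i < k then T0 ! i else i)"
        unfolding T0_def using Phi_cls[OF t0(1) x] t0(2) k_def by simp
      have vs: "map (\<lambda>h. h x) (map (\<lambda>i. PhiF G ord (ns ! i) (Ys ! i)) [0..<length ns]) ! j
         = (\<lambda>q. if q < ns ! j then Tj j ! q else q)" if "j < k" for j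
        unfolding Tj_def using that k_def Phi_cls[OF tt[OF that, THEN conjunct1] x] tt[OF that] by simp
      define F where "F j = map (\<lambda>q. sum_list (take j ns) + (map (\<lambda>h. h x) (map (\<lambda>i. PhiF G ord (ns ! i) (Ys ! i)) [0..<length ns]) ! j) q) [0..<ns ! j]" for j
      have Fj: "F j = map (\<lambda>i. sum_list (take j ns) + i) (Tj j)" if "j < k" for j
      proof -
        have "F j = map (\<lambda>q. sum_list (take j ns) + Tj j ! q) [0..<ns ! j]"
          unfolding F_def vs[OF that] by simp
        also have "\<dots> = map (\<lambda>i. sum_list (take j ns) + i) (Tj j)"
          using map_upt_nth[of "\<lambda>i. sum_list (take j ns) + i" "Tj j"] Tjp[OF that] by simp
        finally show ?thesis .
      qed
      have L: "concat (map (\<lambda>p. F (PhiF G ord (length ns) X x p)) [0..<length ns]) = Lx"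
      proof -
        have "map (\<lambda>p. F (PhiF G ord (length ns) X x p)) [0..<length ns] = map (\<lambda>p. F (T0 ! p)) [0..<length T0]"
          unfolding w using T0p k_def by simp
        also have "\<dots> = map F T0" by (rule map_upt_nth)
        also have "\<dots> = map (\<lambda>j. map (\<lambda>i. sum_list (take j ns) + i) (Tj j)) T0"
          using Fj T0p by (intro map_cong) auto
        finally show ?thesis unfolding Lx_def by simp
      qed
      have lenL: "length Lx = sum_list ns"
      proof -
        have "length Lx = sum_list (map (\<lambda>j. length (Tj j)) T0)" unfolding Lx_def by (simp add: length_concat o_def)
        also have "\<dots> = sum_list (map (\<lambda>j. ns ! j) T0)" using Tjp T0p by (intro arg_cong[where f=sum_list] map_cong) auto
        also have "\<dots> = sum_list (map (\<lambda>j. ns ! j) [0..<k])"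
        proof (rule sum_list_map_mset)
          show "mset T0 = mset [0..<k]" using T0p set_eq_iff_mset_eq_distinct[of T0 "[0..<k]"]
            by (simp add: atLeast0LessThan)
        qed
        also have "\<dots> = sum_list ns" unfolding k_def using map_upt_nth[of "\<lambda>x. x" ns] by simp
        finally show ?thesis .
      qed
      have RHS: "PG_comp G (PhiF G ord (length ns) X) ns (map (\<lambda>i. PhiF G ord (ns ! i) (Ys ! i)) [0..<length ns]) x
         = (\<lambda>p. if p < length Lx then Lx ! p else p)"
        unfolding PG_comp_def assoc_comp_def restrict_apply'[OF x] Let_def F_def[symmetric] L ..
      show ?thesis unfolding LHS RHS lenL ..
    qed
  qed
qed

lemma operad_exists: "operad_map G ord (PhiF G ord)"
  unfolding operad_map_def
proof (intro conjI allI impI)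
  fix n show "is_functor (chaotic (FO G ord n)) (chaotic (PG G n)) (PhiF G ord n) (chaotic_functor (PhiF G ord n))"
    by (rule chaotic_is_functor) (simp add: Phi_PG)
next
  fix n X a \<tau> assume "X \<in> FO G ord n" "a \<in> carrier G" "\<tau> \<in> perms n"
  then show "PhiF G ord n (FO_act G ord (a, \<tau>) X) = PG_act G (a, \<tau>) (PhiF G ord n X)" by (rule Phi_equiv)
next
  fix X ns Ys assume "X \<in> FO G ord (length ns)" "length Ys = length ns" "\<forall>i<length ns. Ys ! i \<in> FO G ord (ns ! i)"
  then show "PhiF G ord (sum_list ns) (FO_comp G ord X ns Ys) =
     PG_comp G (PhiF G ord (length ns) X) ns (map (\<lambda>i. PhiF G ord (ns ! i) (Ys ! i)) [0..<length ns])"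
    by (rule Phi_comp)
next
  show "PhiF G ord 1 (FO_unit G ord) = PG_unit G" by (rule Phi_unit)
qed

end

locale kctx = pctx G ord for G :: "('g,'b) monoid_scheme" (structure) and ord +
  fixes n :: nat and \<Lambda> and f
  assumes sg: "subgroup_GS G n \<Lambda>" and fPG: "f \<in> PG G n" and ffix: "\<forall>l\<in>\<Lambda>. PG_act G l f = f"
begin

lemma Lsub: "\<Lambda> \<subseteq> carrier G \<times> perms n" using sg unfolding subgroup_GS_def by blast
lemma Lmult: "(a,\<sigma>) \<in> \<Lambda> \<Longrightarrow> (b,\<rho>) \<in> \<Lambda> \<Longrightarrow> (a \<otimes> b, \<sigma> \<circ> \<rho>) \<in> \<Lambda>"
  using sg unfolding subgroup_GS_def by blast
lemma Linv: "(a,\<sigma>) \<in> \<Lambda> \<Longrightarrow> (inv a, Hilbert_Choice.inv \<sigma>) \<in> \<Lambda>"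
  using sg unfolding subgroup_GS_def by blast
lemma Lone: "(\<one>, id) \<in> \<Lambda>"
  using sg unfolding subgroup_GS_def by blast

lemma Lid: assumes "(\<one>,\<tau>) \<in> \<Lambda>" shows "\<tau> = id"
proof -
  have "PG_act G (\<one>,\<tau>) f = f" using ffix assms by blast
  then have "PG_act G (\<one>,\<tau>) f \<one> = f \<one>" by simp
  then have e: "\<tau> \<circ> f \<one> = f \<one>" unfolding PG_act_def by simp
  have "f \<one> \<in> perms n" using fPG unfolding PG_def by auto
  then have s: "surj (f \<one>)" unfolding perms_def using permutes_surj by blast
  show ?thesis
  proof
    fix y obtain z where "y = f \<one> z" using s by blast
    then show "\<tau> y = id y" using e by (metis comp_apply id_apply)
  qed
qed

lemma Luniq: assumes "(a,\<sigma>) \<in> \<Lambda>" "(a,\<sigma>') \<in> \<Lambda>" shows "\<sigma> = \<sigma>'"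
proof -
  have a: "a \<in> carrier G" using assms Lsub by auto
  have p: "\<sigma>' permutes {..<n}" using assms Lsub unfolding perms_def by auto
  have "(a \<otimes> inv a, \<sigma> \<circ> Hilbert_Choice.inv \<sigma>') \<in> \<Lambda>" using Lmult[OF assms(1) Linv[OF assms(2)]] .
  then have "\<sigma> \<circ> Hilbert_Choice.inv \<sigma>' = id" using Lid a by simp
  then have "\<sigma> \<circ> Hilbert_Choice.inv \<sigma>' \<circ> \<sigma>' = \<sigma>'" by simp
  then show ?thesis using permutes_inv_o(2)[OF p] by (simp add: o_assoc[symmetric])
qed

definition HH where "HH = fst ` \<Lambda>"
definition phi where "phi h = (THE \<sigma>. (h,\<sigma>) \<in> \<Lambda>)"

lemma phi_eq: "(h,\<sigma>) \<in> \<Lambda> \<Longrightarrow> phi h = \<sigma>"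
  unfolding phi_def using Luniq by blast

lemma phi_in: "h \<in> HH \<Longrightarrow> (h, phi h) \<in> \<Lambda>"
  unfolding HH_def using phi_eq by force

lemma HH_c: "h \<in> HH \<Longrightarrow> h \<in> carrier G" unfolding HH_def using Lsub by auto

lemma phi_perm: "h \<in> HH \<Longrightarrow> phi h \<in> perms n" using phi_in Lsub by auto

lemma phi_mult: "h1 \<in> HH \<Longrightarrow> h2 \<in> HH \<Longrightarrow> h1 \<otimes> h2 \<in> HH \<and> phi (h1 \<otimes> h2) = phi h1 \<circ> phi h2"
proof -
  assume h: "h1 \<in> HH" "h2 \<in> HH"
  have "(h1 \<otimes> h2, phi h1 \<circ> phi h2) \<in> \<Lambda>" using Lmult[OF phi_in[OF h(1)] phi_in[OF h(2)]] .
  then show ?thesis unfolding HH_def using phi_eq by force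
qed

lemma phi_one: "\<one> \<in> HH \<and> phi \<one> = id"
  using Lone phi_eq unfolding HH_def by force

lemma phi_inv: "h \<in> HH \<Longrightarrow> inv h \<in> HH"
proof -
  assume h: "h \<in> HH"
  have "(inv h, Hilbert_Choice.inv (phi h)) \<in> \<Lambda>" using Linv[OF phi_in[OF h]] .
  then show ?thesis unfolding HH_def by force
qed

lemma phi_inv_l: "h \<in> HH \<Longrightarrow> phi (inv h) \<circ> phi h = id"
  using phi_mult[OF phi_inv] phi_one HH_c by (metis l_inv)

lemma phi_inv_r: "h \<in> HH \<Longrightarrow> phi h \<circ> phi (inv h) = id"
  using phi_mult[OF _ phi_inv] phi_one HH_c by (metis r_inv)

lemma HH_sub: "subgroup HH G"
proof
  show "HH \<subseteq> carrier G" using HH_c by blast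
  show "\<And>x y. x \<in> HH \<Longrightarrow> y \<in> HH \<Longrightarrow> x \<otimes> y \<in> HH" using phi_mult by blast
  show "\<one> \<in> HH" using phi_one by blast
  show "\<And>x. x \<in> HH \<Longrightarrow> inv x \<in> HH" using phi_inv by blast
qed

end

lemma cosetof_memI: "(b,\<rho>) \<in> \<Gamma> \<Longrightarrow> (a \<otimes>\<^bsub>G\<^esub> b, \<sigma> \<circ> \<rho>) \<in> cosetof G \<Gamma> a \<sigma>"
  unfolding cosetof_def by blast

lemma cosetof_memE: "z \<in> cosetof G \<Gamma> a \<sigma> \<Longrightarrow> \<exists>b \<rho>. (b,\<rho>) \<in> \<Gamma> \<and> z = (a \<otimes>\<^bsub>G\<^esub> b, \<sigma> \<circ> \<rho>)"
  unfolding cosetof_def by blast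

lemma Gamma_EO_iff: "(b,\<rho>) \<in> Gamma G ord (EO H K) \<longleftrightarrow> b \<in> H \<and> \<rho> = permrep G ord H K b"
  by auto

context kctx begin

definition fixedT where
  "fixedT T \<longleftrightarrow> (\<forall>h\<in>HH. teqG G ord (relabel (phi h) (maplab (gen_act G (h,id)) T)) T)"

definition Kp where "Kp p = {h \<in> HH. phi h p = p}"
definition orb where "orb p = (\<lambda>h. phi h p) ` HH"

lemma phi_lt: "h \<in> HH \<Longrightarrow> q < n \<Longrightarrow> phi h q < n"
  using perm_lt phi_perm by blast

lemma phi_app_mult: "h1 \<in> HH \<Longrightarrow> h2 \<in> HH \<Longrightarrow> phi (h1 \<otimes> h2) q = phi h1 (phi h2 q)"
  using phi_mult by simp

lemma Kp_sub: "subgroup (Kp p) G"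
proof
  show "Kp p \<subseteq> carrier G" unfolding Kp_def using HH_c by blast
  show "\<And>x y. x \<in> Kp p \<Longrightarrow> y \<in> Kp p \<Longrightarrow> x \<otimes> y \<in> Kp p"
    unfolding Kp_def using phi_mult by auto
  show "\<one> \<in> Kp p" unfolding Kp_def using phi_one by simp
  show "\<And>x. x \<in> Kp p \<Longrightarrow> inv x \<in> Kp p"
  proof -
    fix x assume x: "x \<in> Kp p"
    then have xH: "x \<in> HH" and xp: "phi x p = p" unfolding Kp_def by auto
    have "phi (inv x) p = phi (inv x) (phi x p)" using xp by simp
    also have "\<dots> = p" using phi_inv_l[OF xH] by (metis comp_apply id_apply)
    finally show "inv x \<in> Kp p" unfolding Kp_def using phi_inv[OF xH] by simp
  qed
qed

lemma Kp_le: "Kp p \<subseteq> HH" unfolding Kp_def by blast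

lemma coset_phi:
  assumes h: "h \<in> HH" and h': "h' \<in> HH"
  shows "(h <# Kp p = h' <# Kp p) \<longleftrightarrow> phi h p = phi h' p"
proof
  assume e: "h <# Kp p = h' <# Kp p"
  have "h' \<in> h' <# Kp p"
    unfolding l_coset_def using subgroup.one_closed[OF Kp_sub] HH_c[OF h'] by force
  then have "h' \<in> h <# Kp p" using e by simp
  then obtain k where k: "k \<in> Kp p" "h' = h \<otimes> k" unfolding l_coset_def by blast
  have kH: "k \<in> HH" and kp: "phi k p = p" using k(1) unfolding Kp_def by auto
  show "phi h p = phi h' p" using k(2) phi_app_mult[OF h kH] kp by simp
next
  assume e: "phi h p = phi h' p"
  let ?k = "inv h \<otimes> h'"
  have kH: "?k \<in> HH" using phi_mult[OF phi_inv[OF h] h'] by simp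
  have "phi ?k p = phi (inv h) (phi h' p)" using phi_app_mult[OF phi_inv[OF h] h'] .
  also have "\<dots> = phi (inv h) (phi h p)" using e by simp
  also have "\<dots> = p" using phi_inv_l[OF h] by (metis comp_apply id_apply)
  finally have kK: "?k \<in> Kp p" unfolding Kp_def using kH by simp
  have hc: "h \<in> carrier G" "h' \<in> carrier G" using HH_c h h' by auto
  have "h' = h \<otimes> ?k" using hc by (simp add: m_assoc[symmetric])
  then have "h' \<in> h <# Kp p" unfolding l_coset_def using kK by blast
  then show "h <# Kp p = h' <# Kp p" using l_repr_independence[OF _ hc(1) Kp_sub] by blast
qed


context
  fixes p assumes KH: "Kp p \<subset> HH"
begin

abbreviation "KK \<equiv> Kp p"
abbreviation "mm \<equiv> card (lcos G HH KK)"
definition rep where "rep i = (SOME h. h \<in> HH \<and> ord HH KK i = h <# KK)"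
definition beta where "beta i = phi (rep i) p"
definition s0 where "s0 = (EO HH KK, Gamma G ord (EO HH KK))"
definition T0 where "T0 = Node s0 (map (\<lambda>i. Leaf (beta i)) [0..<mm])"

lemmas pr_prop = permrep_prop[OF HH_sub Kp_sub KH]
lemmas pr_uniq = permrep_uniq[OF HH_sub Kp_sub KH]
lemmas pr_mult = permrep_mult[OF HH_sub Kp_sub KH]
lemmas pr_one = permrep_one[OF HH_sub Kp_sub KH]
lemmas pr_perm = permrep_perm[OF HH_sub Kp_sub KH]
lemmas o_in = ord_in[OF HH_sub Kp_sub KH]
lemmas o_inj = ord_inj[OF HH_sub Kp_sub KH]
lemmas o_surj = ord_surj[OF HH_sub Kp_sub KH]

lemma rep_prop: "i < mm \<Longrightarrow> rep i \<in> HH \<and> ord HH KK i = rep i <# KK"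
proof -
  assume i: "i < mm"
  have "ord HH KK i \<in> lcos G HH KK" using o_in[OF i] .
  then have "\<exists>h. h \<in> HH \<and> ord HH KK i = h <# KK" unfolding lcos_def by blast
  then show ?thesis unfolding rep_def by (rule someI_ex)
qed

lemma beta_inj: "i < mm \<Longrightarrow> j < mm \<Longrightarrow> beta i = beta j \<Longrightarrow> i = j"
proof -
  assume ij: "i < mm" "j < mm" "beta i = beta j"
  have "rep i <# KK = rep j <# KK"
    using coset_phi[of "rep i" "rep j" p] rep_prop[OF ij(1)] rep_prop[OF ij(2)] ij(3) unfolding beta_def by blast
  then have "ord HH KK i = ord HH KK j" using rep_prop[OF ij(1)] rep_prop[OF ij(2)] by simp
  then show "i = j" using o_inj ij by blast
qed

lemma beta_set: "beta ` {..<mm} = orb p"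
proof
  show "beta ` {..<mm} \<subseteq> orb p" unfolding beta_def orb_def using rep_prop by auto
  show "orb p \<subseteq> beta ` {..<mm}"
  proof
    fix q assume "q \<in> orb p"
    then obtain h where h: "h \<in> HH" "q = phi h p" unfolding orb_def by blast
    have "h <# KK \<in> lcos G HH KK" unfolding lcos_def using h(1) by blast
    then obtain i where i: "i < mm" "ord HH KK i = h <# KK" using o_surj by blast
    have "rep i <# KK = h <# KK" using rep_prop[OF i(1)] i(2) by simp
    then have "beta i = q" unfolding beta_def using coset_phi[of "rep i" h p] rep_prop[OF i(1)] h by blast
    then show "q \<in> beta ` {..<mm}" using i(1) by blast
  qed
qed

lemma beta_perm:
  assumes h: "h \<in> HH" and i: "i < mm"
  shows "beta (permrep G ord HH KK h i) = phi h (beta i)"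
proof -
  let ?j = "permrep G ord HH KK h i"
  have j: "?j < mm" "ord HH KK ?j = h <# ord HH KK i" using pr_prop[OF h i] by auto
  have hc: "h \<in> carrier G" "rep i \<in> carrier G" using HH_c h rep_prop[OF i] by auto
  have KKc: "KK \<subseteq> carrier G" using Kp_sub by (rule subgroup.subset)
  have "rep ?j <# KK = h <# (rep i <# KK)" using rep_prop[OF j(1)] j(2) rep_prop[OF i] by simp
  also have "\<dots> = (h \<otimes> rep i) <# KK" using lcos_m_assoc[OF KKc hc] .
  finally have "phi (rep ?j) p = phi (h \<otimes> rep i) p"
    using coset_phi[of "rep ?j" "h \<otimes> rep i" p] rep_prop[OF j(1)] phi_mult[OF h, of "rep i"] rep_prop[OF i] by blast
  then show ?thesis unfolding beta_def using phi_app_mult[OF h] rep_prop[OF i] by simp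
qed

lemma EO_expos: "EO HH KK \<in> expos G"
proof -
  have "subgroup HH G \<and> subgroup KK G \<and> KK \<subset> HH" using HH_sub Kp_sub KH by simp
  then have "\<exists>H K. EO HH KK = EO H K \<and> subgroup H G \<and> subgroup K G \<and> K \<subset> H" by blast
  then show ?thesis unfolding expos_def by simp
qed

lemma Gamma_EO_c: "fst ` Gamma G ord (EO HH KK) \<subseteq> carrier G"
  using HH_c by auto

lemma s0_coset: "s0 = (EO HH KK, cosetof G (Gamma G ord (EO HH KK)) \<one> id)"
proof -
  have "cosetof G (Gamma G ord (EO HH KK)) \<one> id = Gamma G ord (EO HH KK)"
  proof (rule equalityI; rule subsetI)
    fix z assume zin: "z \<in> cosetof G (Gamma G ord (EO HH KK)) \<one> id"
    obtain b \<rho> where b: "(b,\<rho>) \<in> Gamma G ord (EO HH KK)" "z = (\<one> \<otimes> b, id \<circ> \<rho>)" using cosetof_memE[OF zin] by blast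
    have "b \<in> HH" using b(1) by simp
    then have "\<one> \<otimes> b = b" using HH_c by simp
    then show "z \<in> Gamma G ord (EO HH KK)" using b by simp
  next
    fix z assume z: "z \<in> Gamma G ord (EO HH KK)"
    then obtain b \<rho> where b: "z = (b,\<rho>)" by (cases z)
    have "b \<in> HH" using z b by simp
    then have "\<one> \<otimes> b = b" using HH_c by simp
    then show "z \<in> cosetof G (Gamma G ord (EO HH KK)) \<one> id"
      using cosetof_memI[OF z[unfolded b], where a="\<one>" and \<sigma>="id" and G=G] b by simp
  qed
  then show ?thesis unfolding s0_def by simp
qed

lemma s0_gens: "s0 \<in> gens G ord mm"
proof -
  have "cosetof G (Gamma G ord (EO HH KK)) \<one> id \<in> cosets_GS G mm (Gamma G ord (EO HH KK))"
    unfolding cosets_GS_alt by (rule CollectI, rule exI[of _ "\<one>"], rule exI[of _ id]) simp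
  moreover have "arity G (EO HH KK) = mm" by simp
  ultimately show ?thesis unfolding gens_def s0_coset using EO_expos by blast
qed

lemma ge_fwd:
  assumes h: "h \<in> HH" and h': "h' \<in> HH"
  shows "(h \<otimes> h', permrep G ord HH KK h') \<in> cosetof G (Gamma G ord (EO HH KK)) \<one> (permrep G ord HH KK (inv h))"
proof -
  let ?P = "permrep G ord HH KK"
  have hc: "h \<in> carrier G" using HH_c h .
  have hi: "inv h \<in> HH" using phi_inv h .
  have hh': "h \<otimes> h' \<in> HH" using phi_mult[OF h h'] by simp
  have h'c: "h' \<in> carrier G" using HH_c[OF h'] .
  have ee: "inv h \<otimes> (h \<otimes> h') = h'" using hc h'c by (simp add: m_assoc[symmetric])
  have e1: "?P (inv h) \<circ> ?P (h \<otimes> h') = ?P h'"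
    using pr_mult[OF hi hh'] unfolding ee by simp
  have e2: "\<one> \<otimes> (h \<otimes> h') = h \<otimes> h'" using hc h'c by simp
  have "(h \<otimes> h', ?P (h \<otimes> h')) \<in> Gamma G ord (EO HH KK)" using hh' by simp
  from cosetof_memI[OF this, where a="\<one>" and \<sigma>="?P (inv h)" and G=G] show ?thesis unfolding e1 e2 .
qed

lemma ge_bwd:
  assumes h: "h \<in> HH" and h'': "h'' \<in> HH"
  shows "(h'', permrep G ord HH KK (inv h) \<circ> permrep G ord HH KK h'') \<in> cosetof G (Gamma G ord (EO HH KK)) h id"
proof -
  let ?P = "permrep G ord HH KK"
  have hc: "h \<in> carrier G" using HH_c h .
  have hi: "inv h \<in> HH" using phi_inv h .
  have hh'': "inv h \<otimes> h'' \<in> HH" using phi_mult[OF hi h''] by simp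
  have h''c: "h'' \<in> carrier G" using HH_c[OF h''] .
  have e1: "?P (inv h \<otimes> h'') = ?P (inv h) \<circ> ?P h''" using pr_mult[OF hi h''] .
  have e2: "h \<otimes> (inv h \<otimes> h'') = h''" using hc h''c by (simp add: m_assoc[symmetric])
  have "(inv h \<otimes> h'', ?P (inv h \<otimes> h'')) \<in> Gamma G ord (EO HH KK)" using hh'' by simp
  from cosetof_memI[OF this, where a="h" and \<sigma>="id" and G=G] show ?thesis unfolding e1 e2 by simp
qed

lemma gen_eq:
  assumes h: "h \<in> HH"
  shows "gen_act G (h,id) s0 = gen_act G (\<one>, permrep G ord HH KK (inv h)) s0"
proof -
  let ?\<Gamma> = "Gamma G ord (EO HH KK)"
  let ?P = "permrep G ord HH KK"
  have hc: "h \<in> carrier G" using HH_c h .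
  have e1: "gen_act G (h,id) s0 = (EO HH KK, cosetof G ?\<Gamma> h id)"
    unfolding s0_coset using gen_act_coset[OF EO_expos one_closed hc, of id id] hc by simp
  have e2: "gen_act G (\<one>, ?P (inv h)) s0 = (EO HH KK, cosetof G ?\<Gamma> \<one> (?P (inv h)))"
    unfolding s0_coset using gen_act_coset[OF EO_expos one_closed one_closed, of "?P (inv h)" id] by simp
  have "cosetof G ?\<Gamma> h id = cosetof G ?\<Gamma> \<one> (?P (inv h))"
  proof (rule equalityI; rule subsetI)
    fix z assume zin: "z \<in> cosetof G ?\<Gamma> h id"
    obtain b \<rho> where b: "(b,\<rho>) \<in> ?\<Gamma>" "z = (h \<otimes> b, id \<circ> \<rho>)" using cosetof_memE[OF zin] by blast
    have "b \<in> HH" "\<rho> = ?P b" using b(1) by auto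
    then show "z \<in> cosetof G ?\<Gamma> \<one> (?P (inv h))" using ge_fwd[OF h] b(2) by simp
  next
    fix z assume zin: "z \<in> cosetof G ?\<Gamma> \<one> (?P (inv h))"
    obtain b \<rho> where b: "(b,\<rho>) \<in> ?\<Gamma>" "z = (\<one> \<otimes> b, ?P (inv h) \<circ> \<rho>)" using cosetof_memE[OF zin] by blast
    have bb: "b \<in> HH" "\<rho> = ?P b" using b(1) by auto
    have "\<one> \<otimes> b = b" using HH_c[OF bb(1)] by simp
    then show "z \<in> cosetof G ?\<Gamma> h id" using ge_bwd[OF h bb(1)] b(2) bb(2) by simp
  qed
  then show ?thesis using e1 e2 by simp
qed

lemma T0_fixed: "fixedT T0"
  unfolding fixedT_def
proof
  fix h assume h: "h \<in> HH"
  let ?P = "permrep G ord HH KK"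
  have hi: "inv h \<in> HH" using phi_inv h .
  let ?cs = "map (\<lambda>i. Leaf (phi h (beta i))) [0..<mm]"
  have R: "relabel (phi h) (maplab (gen_act G (h,id)) T0) = Node (gen_act G (\<one>, ?P (inv h)) s0) ?cs"
    unfolding T0_def using gen_eq[OF h] by simp
  have A: "teqG G ord (Node (gen_act G (\<one>, ?P (inv h)) s0) ?cs) (Node s0 (map (\<lambda>i. ?cs ! ?P (inv h) i) [0..<mm]))"
    unfolding teqG_def by (rule teq.teq_equiv) (use s0_gens pr_perm[OF hi] in simp_all)
  have B: "map (\<lambda>i. ?cs ! ?P (inv h) i) [0..<mm] = map (\<lambda>i. Leaf (beta i)) [0..<mm]"
  proof (rule map_upt_cong)
    fix i assume i: "i < mm"
    have j: "?P (inv h) i < mm" using pr_prop[OF hi i] by simp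
    have "phi h (beta (?P (inv h) i)) = beta (?P h (?P (inv h) i))" using beta_perm[OF h j] by simp
    also have "?P h (?P (inv h) i) = i"
    proof -
      have "?P h \<circ> ?P (inv h) = ?P (h \<otimes> inv h)" using pr_mult[OF h hi] by simp
      also have "h \<otimes> inv h = \<one>" using HH_c[OF h] by simp
      finally have "?P h \<circ> ?P (inv h) = id" using pr_one by (simp only:)
      then show ?thesis by (metis comp_apply id_apply)
    qed
    finally show "?cs ! ?P (inv h) i = Leaf (beta i)" using j by simp
  qed
  show "teqG G ord (relabel (phi h) (maplab (gen_act G (h, id)) T0)) T0"
    unfolding R using A unfolding B T0_def[symmetric] .
qed

lemma T0_ok: "nodes_ok (gens G ord) T0"
  unfolding T0_def using s0_gens by simp

lemma T0_leaves: "leaves T0 = map beta [0..<mm]"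
proof -
  have "\<And>xs. concat (map (\<lambda>i. [beta i]) xs) = map beta xs" by (induct_tac xs) auto
  then show ?thesis unfolding T0_def by (simp add: o_def)
qed

lemma T0_distinct: "distinct (leaves T0)"
  unfolding T0_leaves distinct_map using beta_inj by (auto simp: inj_on_def)

lemma T0_set: "set (leaves T0) = orb p"
  unfolding T0_leaves using beta_set by (simp add: atLeast0LessThan)

end

end

context kctx begin

lemma fixed_cls:
  assumes T: "fixedT T" and h: "h \<in> HH"
  shows "FO_act G ord (h, phi h) (cls G ord T) = cls G ord T"
proof -
  have hc: "h \<in> carrier G" using HH_c h .
  have fx: "teqG G ord (relabel (phi h) (maplab (gen_act G (h,id)) T)) T"
    using T h unfolding fixedT_def by blast
  show ?thesis
  proof (rule equalityI; rule subsetI)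
    fix u assume "u \<in> FO_act G ord (h, phi h) (cls G ord T)"
    then obtain t where t: "t \<in> cls G ord T" "teqG G ord u (relabel (phi h) (maplab (gen_act G (h,id)) t))"
      unfolding FO_act_def by auto
    have "teqG G ord t T" using t(1) unfolding cls_def by simp
    then have "teqG G ord (relabel (phi h) (maplab (gen_act G (h,id)) t)) (relabel (phi h) (maplab (gen_act G (h,id)) T))"
      by (intro teqG_relabel teqG_maplab hc)
    then have "teqG G ord u T" using t(2) fx teqG_trans by blast
    then show "u \<in> cls G ord T" unfolding cls_def by simp
  next
    fix u assume "u \<in> cls G ord T"
    then have "teqG G ord u T" unfolding cls_def by simp
    then have "teqG G ord u (relabel (phi h) (maplab (gen_act G (h,id)) T))"
      using teqG_sym[OF fx] teqG_trans by blast
    then show "u \<in> FO_act G ord (h, phi h) (cls G ord T)"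
      unfolding FO_act_def using cls_self[of T] by auto
  qed
qed

lemma triv_coset:
  assumes a: "a \<in> carrier G"
  shows "cosetof G (carrier G \<times> {id}) a \<sigma> = carrier G \<times> {\<sigma>}"
proof (rule equalityI; rule subsetI)
  fix z assume zin: "z \<in> cosetof G (carrier G \<times> {id}) a \<sigma>"
  obtain b \<rho> where b: "(b,\<rho>) \<in> carrier G \<times> {id}" "z = (a \<otimes> b, \<sigma> \<circ> \<rho>)" using cosetof_memE[OF zin] by blast
  then show "z \<in> carrier G \<times> {\<sigma>}" using a by auto
next
  fix z assume z: "z \<in> carrier G \<times> {\<sigma>}"
  then obtain g where g: "g \<in> carrier G" "z = (g, \<sigma>)" by auto
  have "(inv a \<otimes> g, id) \<in> carrier G \<times> {id}" using a g by simp
  from cosetof_memI[OF this, where a=a and \<sigma>=\<sigma> and G=G]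
  have "(a \<otimes> (inv a \<otimes> g), \<sigma> \<circ> id) \<in> cosetof G (carrier G \<times> {id}) a \<sigma>" .
  moreover have "a \<otimes> (inv a \<otimes> g) = g" using a g by (simp add: m_assoc[symmetric])
  ultimately show "z \<in> cosetof G (carrier G \<times> {id}) a \<sigma>" using g by simp
qed

definition sE :: "'g expo \<Rightarrow> 'g gen" where "sE e = (e, carrier G \<times> {id})"

lemma sE_gens: "e = E0 \<or> e = E2 \<Longrightarrow> sE e \<in> gens G ord (arity G e)"
proof -
  assume e: "e = E0 \<or> e = E2"
  have ex: "e \<in> expos G" using e unfolding expos_def by auto
  have g: "Gamma G ord e = carrier G \<times> {id}" using e by auto
  have "cosetof G (Gamma G ord e) \<one> id = carrier G \<times> {id}" unfolding g using triv_coset by simp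
  then have "carrier G \<times> {id} \<in> cosets_GS G (arity G e) (Gamma G ord e)"
    unfolding cosets_GS_alt by (rule_tac CollectI, rule_tac exI[of _ "\<one>"], rule_tac exI[of _ id]) simp
  then show ?thesis unfolding gens_def sE_def using ex by simp
qed

lemma sE_act: "e = E0 \<or> e = E2 \<Longrightarrow> h \<in> carrier G \<Longrightarrow> gen_act G (h,id) (sE e) = sE e"
  unfolding gen_act_def sE_def using triv_coset[of h id] triv_coset[of \<one> id]
  unfolding coset_act_def cosetof_def by simp

lemma leaf_fixed: "(\<forall>h\<in>HH. phi h p = p) \<Longrightarrow> fixedT (Leaf p)"
  unfolding fixedT_def by (simp add: teqG_refl)

lemma node2_fixed:
  assumes "fixedT T1" "fixedT T2"
  shows "fixedT (Node (sE E2) [T1, T2])"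
  unfolding fixedT_def
proof
  fix h assume h: "h \<in> HH"
  have "teqG G ord (relabel (phi h) (maplab (gen_act G (h,id)) T1)) T1"
       "teqG G ord (relabel (phi h) (maplab (gen_act G (h,id)) T2)) T2"
    using assms h unfolding fixedT_def by auto
  then have "list_all2 (teqG G ord) [relabel (phi h) (maplab (gen_act G (h,id)) T1), relabel (phi h) (maplab (gen_act G (h,id)) T2)] [T1, T2]"
    by simp
  then have "teqG G ord (Node (sE E2) [relabel (phi h) (maplab (gen_act G (h,id)) T1), relabel (phi h) (maplab (gen_act G (h,id)) T2)]) (Node (sE E2) [T1, T2])"
    unfolding teqG_def by (rule teq.teq_cong)
  then show "teqG G ord (relabel (phi h) (maplab (gen_act G (h, id)) (Node (sE E2) [T1, T2]))) (Node (sE E2) [T1, T2])"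
    using sE_act[of E2 h] HH_c[OF h] by simp
qed

lemma node0_fixed: "fixedT (Node (sE E0) [])"
  unfolding fixedT_def using sE_act[of E0] HH_c by (simp add: teqG_refl)


lemma phi_back: "h \<in> HH \<Longrightarrow> phi (inv h) (phi h x) = x"
  using phi_inv_l by (metis comp_apply id_apply)

lemma orb_sub: "p \<in> A \<Longrightarrow> \<forall>h\<in>HH. \<forall>x\<in>A. phi h x \<in> A \<Longrightarrow> orb p \<subseteq> A"
  unfolding orb_def by blast

lemma orb_self: "p \<in> orb p"
proof -
  have "phi \<one> p = p" using phi_one by simp
  then show ?thesis unfolding orb_def using phi_one by (metis imageI)
qed

lemma orb_tree:
  assumes p: "p < n"
  shows "\<exists>T. nodes_ok (gens G ord) T \<and> distinct (leaves T) \<and> set (leaves T) = orb p \<and> fixedT T"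
proof (cases "\<forall>h\<in>HH. phi h p = p")
  case True
  have "orb p = {p}" unfolding orb_def using True phi_one by auto
  then show ?thesis using leaf_fixed[OF True] by (intro exI[of _ "Leaf p"]) simp
next
  case False
  then obtain h where h: "h \<in> HH" "phi h p \<noteq> p" by blast
  have "Kp p \<subset> HH" using Kp_le h unfolding Kp_def by blast
  then show ?thesis using T0_ok T0_distinct T0_set T0_fixed by blast
qed

lemma build:
  assumes "A \<subseteq> {..<n}" "A \<noteq> {}" "\<forall>h\<in>HH. \<forall>x\<in>A. phi h x \<in> A"
  shows "\<exists>T. nodes_ok (gens G ord) T \<and> distinct (leaves T) \<and> set (leaves T) = A \<and> fixedT T"
  using assms
proof (induction "card A" arbitrary: A rule: less_induct)
  case less
  obtain p where pA: "p \<in> A" using less.prems(2) by blast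
  have pn: "p < n" using pA less.prems(1) by auto
  have oA: "orb p \<subseteq> A" using orb_sub[OF pA less.prems(3)] .
  obtain TO where TO: "nodes_ok (gens G ord) TO" "distinct (leaves TO)" "set (leaves TO) = orb p" "fixedT TO"
    using orb_tree[OF pn] by blast
  show ?case
  proof (cases "orb p = A")
    case True
    then show ?thesis using TO by blast
  next
    case False
    define B where "B = A - orb p"
    have fA: "finite A" using less.prems(1) finite_subset by blast
    have Bn: "B \<subseteq> {..<n}" using less.prems(1) B_def by blast
    have Bne: "B \<noteq> {}" using False oA B_def by blast
    have Binv: "\<forall>h\<in>HH. \<forall>x\<in>B. phi h x \<in> B"
    proof (intro ballI)
      fix h x assume h: "h \<in> HH" and x: "x \<in> B"
      have xA: "x \<in> A" "x \<notin> orb p" using x B_def by auto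
      have "phi h x \<in> A" using less.prems(3) h xA(1) by blast
      moreover have "phi h x \<notin> orb p"
      proof
        assume "phi h x \<in> orb p"
        then obtain g where g: "g \<in> HH" "phi h x = phi g p" unfolding orb_def by blast
        have "x = phi (inv h) (phi g p)" using phi_back[OF h, of x] g(2) by simp
        also have "\<dots> = phi (inv h \<otimes> g) p" using phi_mult[OF phi_inv[OF h] g(1)] by simp
        finally have "x \<in> orb p" unfolding orb_def using phi_mult[OF phi_inv[OF h] g(1)] by blast
        then show False using xA(2) by simp
      qed
      ultimately show "phi h x \<in> B" unfolding B_def by blast
    qed
    have "card B < card A"
    proof -
      have "B \<subset> A" using B_def orb_self[of p] pA by blast
      then show ?thesis using fA psubset_card_mono by blast
    qed
    then obtain TB where TB: "nodes_ok (gens G ord) TB" "distinct (leaves TB)" "set (leaves TB) = B" "fixedT TB"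
      using less.hyps[OF _ Bn Bne Binv] by blast
    let ?T = "Node (sE E2) [TO, TB]"
    have "nodes_ok (gens G ord) ?T" using TO(1) TB(1) sE_gens[of E2] by (simp add: numeral_2_eq_2)
    moreover have "distinct (leaves ?T)" using TO(2,3) TB(2,3) B_def by auto
    moreover have "set (leaves ?T) = A" using TO(3) TB(3) B_def oA by auto
    moreover have "fixedT ?T" using node2_fixed[OF TO(4) TB(4)] .
    ultimately show ?thesis by blast
  qed
qed

lemma key_k: "\<exists>X\<in>FO G ord n. \<forall>l\<in>\<Lambda>. FO_act G ord l X = X"
proof -
  obtain T where T: "wft (gens G ord) n T" "fixedT T"
  proof (cases "n = 0")
    case True
    have "wft (gens G ord) n (Node (sE E0) [])" unfolding wft_def using True sE_gens[of E0] by simp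
    then show ?thesis using that node0_fixed by blast
  next
    case False
    have inv: "\<forall>h\<in>HH. \<forall>x\<in>{..<n}. phi h x \<in> {..<n}" using phi_lt by simp
    obtain T where "nodes_ok (gens G ord) T" "distinct (leaves T)" "set (leaves T) = {..<n}" "fixedT T"
      using build[OF subset_refl _ inv] False by auto
    then show ?thesis using that unfolding wft_def by blast
  qed
  have "cls G ord T \<in> FO G ord n" unfolding FO_def using T(1) by blast
  moreover have "\<forall>l\<in>\<Lambda>. FO_act G ord l (cls G ord T) = cls G ord T"
  proof
    fix l assume l: "l \<in> \<Lambda>"
    obtain h \<sigma> where hs: "l = (h,\<sigma>)" by (cases l)
    have hH: "h \<in> HH" unfolding HH_def using l hs by force
    have "\<sigma> = phi h" using phi_eq l hs by simp
    then show "FO_act G ord l (cls G ord T) = cls G ord T" using fixed_cls[OF T(2) hH] hs by simp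
  qed
  ultimately show ?thesis by blast
qed

end

lemma fixsub_chaotic:
  shows "obj (fixsub (chaotic X) ao (\<lambda>l. map_prod (ao l) (ao l)) L) = {x\<in>X. \<forall>l\<in>L. ao l x = x}"
    and "hom (fixsub (chaotic X) ao (\<lambda>l. map_prod (ao l) (ao l)) L) x y =
           (if x \<in> X \<and> (\<forall>l\<in>L. ao l x = x) \<and> y \<in> X \<and> (\<forall>l\<in>L. ao l y = y) then {(x,y)} else {})"
    and "idm (fixsub (chaotic X) ao (\<lambda>l. map_prod (ao l) (ao l)) L) = (\<lambda>x. (x,x))"
    and "cmp (fixsub (chaotic X) ao (\<lambda>l. map_prod (ao l) (ao l)) L) = (\<lambda>g f. (fst f, snd g))"
  unfolding fixsub_def chaotic_def by auto

lemma equiv_chaotic: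
  assumes Fobj: "\<And>x. x \<in> X \<Longrightarrow> (\<forall>l\<in>L. ao l x = x) \<Longrightarrow> F x \<in> Y \<and> (\<forall>l\<in>L. bo l (F x) = F x)"
    and ess: "\<And>d. d \<in> Y \<Longrightarrow> (\<forall>l\<in>L. bo l d = d) \<Longrightarrow> \<exists>c\<in>X. \<forall>l\<in>L. ao l c = c"
  shows "is_equivalence (fixsub (chaotic X) ao (\<lambda>l. map_prod (ao l) (ao l)) L)
           (fixsub (chaotic Y) bo (\<lambda>l. map_prod (bo l) (bo l)) L) F (chaotic_functor F)"
proof -
  have func: "is_functor (fixsub (chaotic X) ao (\<lambda>l. map_prod (ao l) (ao l)) L)
           (fixsub (chaotic Y) bo (\<lambda>l. map_prod (bo l) (bo l)) L) F (chaotic_functor F)"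
    unfolding is_functor_def fixsub_chaotic chaotic_functor_def using Fobj by auto
  have full: "\<forall>x\<in>obj (fixsub (chaotic X) ao (\<lambda>l. map_prod (ao l) (ao l)) L).
     \<forall>y\<in>obj (fixsub (chaotic X) ao (\<lambda>l. map_prod (ao l) (ao l)) L).
     \<forall>g\<in>hom (fixsub (chaotic Y) bo (\<lambda>l. map_prod (bo l) (bo l)) L) (F x) (F y).
     \<exists>f\<in>hom (fixsub (chaotic X) ao (\<lambda>l. map_prod (ao l) (ao l)) L) x y. chaotic_functor F f = g"
    unfolding fixsub_chaotic chaotic_functor_def by auto
  have faith: "\<forall>x\<in>obj (fixsub (chaotic X) ao (\<lambda>l. map_prod (ao l) (ao l)) L).
     \<forall>y\<in>obj (fixsub (chaotic X) ao (\<lambda>l. map_prod (ao l) (ao l)) L).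
     inj_on (chaotic_functor F) (hom (fixsub (chaotic X) ao (\<lambda>l. map_prod (ao l) (ao l)) L) x y)"
    unfolding fixsub_chaotic by auto
  have es: "\<forall>d\<in>obj (fixsub (chaotic Y) bo (\<lambda>l. map_prod (bo l) (bo l)) L).
     \<exists>c\<in>obj (fixsub (chaotic X) ao (\<lambda>l. map_prod (ao l) (ao l)) L).
     \<exists>f. is_iso (fixsub (chaotic Y) bo (\<lambda>l. map_prod (bo l) (bo l)) L) (F c) d f"
  proof
    fix d assume d: "d \<in> obj (fixsub (chaotic Y) bo (\<lambda>l. map_prod (bo l) (bo l)) L)"
    then have d': "d \<in> Y" "\<forall>l\<in>L. bo l d = d" unfolding fixsub_chaotic by auto
    obtain c where c: "c \<in> X" "\<forall>l\<in>L. ao l c = c" using ess[OF d'] by blast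
    have Fc: "F c \<in> Y" "\<forall>l\<in>L. bo l (F c) = F c" using Fobj[OF c] by auto
    have "is_iso (fixsub (chaotic Y) bo (\<lambda>l. map_prod (bo l) (bo l)) L) (F c) d (F c, d)"
      unfolding is_iso_def fixsub_chaotic using Fc d' by auto
    then show "\<exists>c\<in>obj (fixsub (chaotic X) ao (\<lambda>l. map_prod (ao l) (ao l)) L).
     \<exists>f. is_iso (fixsub (chaotic Y) bo (\<lambda>l. map_prod (bo l) (bo l)) L) (F c) d f"
      using c unfolding fixsub_chaotic by auto
  qed
  show ?thesis unfolding is_equivalence_def using func full faith es by blast
qed


lemma (in pctx) key:
  assumes "subgroup_GS G n \<Lambda>" and "f \<in> PG G n" and "\<forall>l\<in>\<Lambda>. PG_act G l f = f"
  shows "\<exists>X\<in>FO G ord n. \<forall>l\<in>\<Lambda>. FO_act G ord l X = X"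
proof -
  interpret kctx G ord n \<Lambda> f by unfold_locales (use assms in auto)
  show ?thesis using key_k .
qed

theorem proposition4p13:
  fixes G :: "('g, 'b) monoid_scheme" and ord :: "'g ordering"
  assumes "group G" and "finite (carrier G)"
    and "orderings_ok G ord"
  shows "(\<exists>\<Phi>. operad_map G ord \<Phi>) \<and>
         (\<forall>\<Phi>. operad_map G ord \<Phi> \<longrightarrow>
            (\<forall>n \<Lambda>. subgroup_GS G n \<Lambda> \<longrightarrow>
               is_equivalence
                 (fixsub (chaotic (FO G ord n)) (FO_act G ord)
                         (\<lambda>l. map_prod (FO_act G ord l) (FO_act G ord l)) \<Lambda>)
                 (fixsub (chaotic (PG G n)) (PG_act G)
                         (\<lambda>l. map_prod (PG_act G l) (PG_act G l)) \<Lambda>)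
                 (\<Phi> n) (chaotic_functor (\<Phi> n))))"
proof -
  interpret pctx G ord using assms by (simp add: pctx_def pctx_axioms_def)
  have ex: "\<exists>\<Phi>. operad_map G ord \<Phi>" using operad_exists by blast
  have eq: "is_equivalence
                 (fixsub (chaotic (FO G ord n)) (FO_act G ord)
                         (\<lambda>l. map_prod (FO_act G ord l) (FO_act G ord l)) \<Lambda>)
                 (fixsub (chaotic (PG G n)) (PG_act G)
                         (\<lambda>l. map_prod (PG_act G l) (PG_act G l)) \<Lambda>)
                 (\<Phi> n) (chaotic_functor (\<Phi> n))"
    if \<Phi>: "operad_map G ord \<Phi>" and \<Lambda>: "subgroup_GS G n \<Lambda>" for \<Phi> n \<Lambda>
  proof (rule equiv_chaotic)
    have hfun: "is_functor (chaotic (FO G ord n)) (chaotic (PG G n)) (\<Phi> n) (chaotic_functor (\<Phi> n))"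
      using \<Phi> unfolding operad_map_def by blast
    have eqv: "\<And>X a \<tau>. X \<in> FO G ord n \<Longrightarrow> a \<in> carrier G \<Longrightarrow> \<tau> \<in> perms n \<Longrightarrow>
        \<Phi> n (FO_act G ord (a,\<tau>) X) = PG_act G (a,\<tau>) (\<Phi> n X)"
      using \<Phi> unfolding operad_map_def by blast
    have Lsub: "\<Lambda> \<subseteq> carrier G \<times> perms n" using \<Lambda> unfolding subgroup_GS_def by blast
    fix x assume x: "x \<in> FO G ord n" and fx: "\<forall>l\<in>\<Lambda>. FO_act G ord l x = x"
    have "\<Phi> n x \<in> PG G n" using hfun x unfolding is_functor_def chaotic_def by simp
    moreover have "\<forall>l\<in>\<Lambda>. PG_act G l (\<Phi> n x) = \<Phi> n x"
    proof
      fix l assume l: "l \<in> \<Lambda>"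
      obtain a \<tau> where l': "l = (a,\<tau>)" "a \<in> carrier G" "\<tau> \<in> perms n" using Lsub l by auto
      show "PG_act G l (\<Phi> n x) = \<Phi> n x" using eqv[OF x l'(2,3)] fx l l'(1) by simp
    qed
    ultimately show "\<Phi> n x \<in> PG G n \<and> (\<forall>l\<in>\<Lambda>. PG_act G l (\<Phi> n x) = \<Phi> n x)" by blast
  next
    fix d assume "d \<in> PG G n" "\<forall>l\<in>\<Lambda>. PG_act G l d = d"
    then show "\<exists>c\<in>FO G ord n. \<forall>l\<in>\<Lambda>. FO_act G ord l c = c" using key[OF \<Lambda>] by blast
  qed
  show ?thesis using ex eq by blast
qed

end
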